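(* Let $N_1,N_2,N_3,K$ be dyadic with $N_1\sim N_2\gg N_3$ and $K\ll N_1$, let $\phi_1,\phi_2,\phi_3\in L^2(\mathbb{T})$ satisfy $\mathrm{supp}\,\hat\phi_j\subset\mathcal{I}_{N_j}$, and let $0<\delta\lesssim N_1^{-1}$. Then \[ \big\|HP_{\le K}\big(e^{it\partial_x^2}\phi_1\,\overline{e^{it\partial_x^2}\phi_2}\big)\,e^{it\partial_x^2}\phi_3\big\|_{L^2([0,\delta];L^2(\mathbb{T}))}\lesssim\Big(\frac{K}{N_1}\Big)^{1/2}\|\phi_1\|_{L^2}\|\phi_2\|_{L^2}\|\phi_3\|_{L^2}. \] The same estimate holds if $e^{it\partial_x^2}\phi_3$ is replaced by $\overline{e^{it\partial_x^2}\phi_3}$, and also if $H$ is replaced by any Fourier multiplier with bounded symbol.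
   Context: $\mathbb{T}=\mathbb{R}/2\pi\mathbb{Z}$; $\hat\phi(n)$ are Fourier coefficients. $H$ is the Hilbert transformation (Fourier multiplier $-i\,\mathrm{sgn}(\xi)$). Fix $\eta\in C_0^\infty(\mathbb{R})$ even, monotone on $[0,\infty)$, with $\chi_{[-4/3,4/3]}\le\eta\le\chi_{[-5/3,5/3]}$; $P_{\le K}$ is the Fourier multiplier with symbol $\eta(\xi/K)$. Dyadic numbers range over $\{1,2,4,\dots\}$; $\mathcal{I}_1=[-2,2]$, $\mathcal{I}_N=[-2N,2N]\setminus(-N/2,N/2)$ for $N\ge2$. $A\sim B$ means $C^{-1}B\le A\le CB$ and $A\gg B$ means $A\ge C_0B$ for suitable absolute constants; $\lesssim$ hides constants depending only on these. *)

theory Defs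
  imports "HOL-Analysis.Analysis"
begin

definition dyadic :: "real \<Rightarrow> bool" where
  "dyadic N \<longleftrightarrow> (\<exists>k::nat. N = 2 ^ k)"

definition annulus :: "real \<Rightarrow> int set" where
  "annulus N = (if N = 1 then {n. \<bar>real_of_int n\<bar> \<le> 2}
                else {n. \<bar>real_of_int n\<bar> \<le> 2 * N \<and> N / 2 \<le> \<bar>real_of_int n\<bar>})"

text \<open>Trigonometric polynomial on T = R/2piZ with (finitely supported) Fourier coefficients c:
  phi(x) = sum_n c(n) e^{inx}.\<close>
definition trig_poly :: "(int \<Rightarrow> complex) \<Rightarrow> real \<Rightarrow> complex" where
  "trig_poly c x = (\<Sum>n\<in>{n. c n \<noteq> 0}. c n * exp (\<i> * of_int n * of_real x))"

text \<open>Linear Schroedinger evolution e^{it d_x^2} (symbol e^{-i t n^2}) of the trigonometric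
  polynomial with coefficients c.\<close>
definition schr :: "(int \<Rightarrow> complex) \<Rightarrow> real \<Rightarrow> real \<Rightarrow> complex" where
  "schr c t = trig_poly (\<lambda>n. exp (- \<i> * of_real t * of_int (n^2)) * c n)"

definition fcoef :: "(real \<Rightarrow> complex) \<Rightarrow> int \<Rightarrow> complex" where
  "fcoef f m = (1 / (2 * pi)) * integral {0..2*pi} (\<lambda>x. f x * exp (- \<i> * of_int m * of_real x))"

definition fmult :: "(int \<Rightarrow> complex) \<Rightarrow> (real \<Rightarrow> complex) \<Rightarrow> real \<Rightarrow> complex" where
  "fmult \<sigma> f x = (\<Sum>\<^sub>\<infinity>m\<in>UNIV. \<sigma> m * fcoef f m * exp (\<i> * of_int m * of_real x))"

definition hilbert_symbol :: "int \<Rightarrow> complex" where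
  "hilbert_symbol m = - \<i> * of_int (sgn m)"

definition lp_symbol :: "(real \<Rightarrow> real) \<Rightarrow> real \<Rightarrow> int \<Rightarrow> complex" where
  "lp_symbol \<eta> K m = complex_of_real (\<eta> (real_of_int m / K))"

definition l2T :: "(real \<Rightarrow> complex) \<Rightarrow> real" where
  "l2T f = sqrt (integral {0..2*pi} (\<lambda>x. (cmod (f x))\<^sup>2))"

definition l2l2 :: "real \<Rightarrow> (real \<Rightarrow> real \<Rightarrow> complex) \<Rightarrow> real" where
  "l2l2 \<delta> F = sqrt (integral {0..\<delta>} (\<lambda>t. integral {0..2*pi} (\<lambda>x. (cmod (F t x))\<^sup>2)))"

definition trilin :: "(int \<Rightarrow> complex) \<Rightarrow> (real \<Rightarrow> real) \<Rightarrow> real \<Rightarrow> bool \<Rightarrow>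
    (int \<Rightarrow> complex) \<Rightarrow> (int \<Rightarrow> complex) \<Rightarrow> (int \<Rightarrow> complex) \<Rightarrow> real \<Rightarrow> real \<Rightarrow> complex" where
  "trilin \<sigma> \<eta> K cj c1 c2 c3 t x =
     fmult \<sigma> (fmult (lp_symbol \<eta> K) (\<lambda>y. schr c1 t y * cnj (schr c2 t y))) x
     * (if cj then cnj (schr c3 t x) else schr c3 t x)"

end

theory Submission
  imports Defs
begin

definition Jint :: "real \<Rightarrow> real \<Rightarrow> real \<Rightarrow> complex" where
  "Jint a b \<omega> = (if \<omega> = 0 then complex_of_real (b - a)
     else (exp (\<i> * of_real \<omega> * of_real b) - exp (\<i> * of_real \<omega> * of_real a)) / (\<i> * of_real \<omega>))"

lemma has_integral_Re_of_real:
  assumes "((\<lambda>x. complex_of_real (f x)) has_integral I) S"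
  shows "(f has_integral Re I) S"
  using has_integral_linear[OF assms bounded_linear_Re] by (simp add: o_def)

lemma exp_has_integral:
  assumes "a \<le> b"
  shows "((\<lambda>t. exp (\<i> * of_real \<omega> * of_real t)) has_integral Jint a b \<omega>) {a..b}"
proof (cases "\<omega> = 0")
  case True
  then show ?thesis using has_integral_const_real[of "1::complex" a b]
    using assms by (simp add: Jint_def scaleR_conv_of_real)
next
  case False
  let ?g = "\<lambda>z::complex. exp (\<i> * of_real \<omega> * z) / (\<i> * of_real \<omega>)"
  have d: "(?g has_field_derivative exp (\<i> * of_real \<omega> * z)) (at z)" for z
    using False by (auto intro!: derivative_eq_intros simp: field_simps)
  have "((\<lambda>t. exp (\<i> * of_real \<omega> * of_real t)) has_integral (?g (of_real b) - ?g (of_real a))) {a..b}"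
    by (rule fundamental_theorem_of_calculus[OF assms])
       (rule has_vector_derivative_real_field[OF d])
  then show ?thesis unfolding Jint_def if_not_P[OF False] diff_divide_distrib .
qed

lemma Jint_norm1:
  assumes "a \<le> b" shows "cmod (Jint a b \<omega>) \<le> b - a"
proof -
  have "cmod (Jint a b \<omega>) \<le> 1 * Henstock_Kurzweil_Integration.content (cbox a b)"
    by (rule has_integral_bound[of 1 "\<lambda>t. exp (\<i> * of_real \<omega> * of_real t)"])
       (use exp_has_integral[OF assms, of \<omega>] in \<open>auto simp: norm_exp_i_times[symmetric]\<close>)
  then show ?thesis using assms by simp
qed

lemma Jint_norm2:
  assumes "\<omega> \<noteq> 0" shows "cmod (Jint a b \<omega>) \<le> 2 / \<bar>\<omega>\<bar>"
proof -
  have "cmod (exp (\<i> * of_real \<omega> * of_real b) - exp (\<i> * of_real \<omega> * of_real a)) \<le> 2"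
    using norm_triangle_ineq4[of "exp (\<i> * of_real \<omega> * of_real b)" "exp (\<i> * of_real \<omega> * of_real a)"]
    by (simp add: norm_exp_eq_Re)
  moreover have "cmod (\<i> * of_real \<omega>) = \<bar>\<omega>\<bar>" by (simp add: norm_mult)
  ultimately show ?thesis using assms
    by (simp add: Jint_def norm_divide divide_right_mono)
qed

lemma Jint_shift: "Jint s (s + c) \<omega> = exp (\<i> * of_real \<omega> * of_real s) * Jint 0 c \<omega>"
proof (cases "\<omega> = 0")
  case True then show ?thesis by (simp add: Jint_def)
next
  case False
  have e: "exp (\<i> * of_real \<omega> * of_real (s + c)) = exp (\<i> * of_real \<omega> * of_real s) * exp (\<i> * of_real \<omega> * of_real c)"
    by (simp only: of_real_add distrib_left exp_add)
  show ?thesis using False unfolding Jint_def if_not_P[OF False] e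
    by (simp add: right_diff_distrib)
qed

lemma exp_int_2pi:
  "((\<lambda>x. exp (\<i> * of_int k * of_real x)) has_integral (if k = 0 then complex_of_real (2*pi) else 0)) {0..2*pi}"
proof -
  have h: "((\<lambda>x. exp (\<i> * of_real (of_int k) * of_real x)) has_integral Jint 0 (2*pi) (of_int k)) {0..2*pi}"
    by (rule exp_has_integral) simp
  have "exp (\<i> * of_real (of_int k) * of_real (2*pi)) = cis (2 * pi * of_int k)"
    by (simp add: cis_conv_exp mult_ac)
  also have "\<dots> = 1" by simp
  finally have "exp (\<i> * of_real (of_int k) * of_real (2*pi)) = 1" .
  then have "Jint 0 (2*pi) (of_int k) = (if k = 0 then complex_of_real (2*pi) else 0)"
    by (simp add: Jint_def)
  with h show ?thesis by simp
qed

definition es :: "('j \<Rightarrow> complex) \<Rightarrow> ('j \<Rightarrow> int) \<Rightarrow> 'j set \<Rightarrow> real \<Rightarrow> complex" where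
  "es d \<xi> J x = (\<Sum>j\<in>J. d j * exp (\<i> * of_int (\<xi> j) * of_real x))"

lemma es_sq_expand:
  assumes "finite J"
  shows "complex_of_real ((cmod (es d \<xi> J x))\<^sup>2) =
    (\<Sum>p\<in>J \<times> J. d (fst p) * cnj (d (snd p)) * exp (\<i> * of_int (\<xi> (fst p) - \<xi> (snd p)) * of_real x))"
proof -
  have c: "cnj (exp (\<i> * of_int k * of_real x)) = exp (- (\<i> * of_int k * of_real x))" for k :: int
    by (simp add: exp_cnj)
  have e: "exp (\<i> * of_int a * of_real x) * exp (- (\<i> * of_int b * of_real x)) = exp (\<i> * of_int (a - b) * of_real x)" for a b :: int
    by (simp add: exp_add[symmetric] algebra_simps)
  have "complex_of_real ((cmod (es d \<xi> J x))\<^sup>2) = es d \<xi> J x * cnj (es d \<xi> J x)"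
    by (rule complex_norm_square)
  also have "\<dots> = (\<Sum>i\<in>J. \<Sum>j\<in>J. (d i * exp (\<i> * of_int (\<xi> i) * of_real x)) * (cnj (d j) * cnj (exp (\<i> * of_int (\<xi> j) * of_real x))))"
    unfolding es_def cnj_sum complex_cnj_mult sum_product ..
  also have "\<dots> = (\<Sum>i\<in>J. \<Sum>j\<in>J. d i * cnj (d j) * exp (\<i> * of_int (\<xi> i - \<xi> j) * of_real x))"
  proof (intro sum.cong refl)
    fix i j
    have "(d i * exp (\<i> * of_int (\<xi> i) * of_real x)) * (cnj (d j) * cnj (exp (\<i> * of_int (\<xi> j) * of_real x)))
       = d i * cnj (d j) * (exp (\<i> * of_int (\<xi> i) * of_real x) * cnj (exp (\<i> * of_int (\<xi> j) * of_real x)))"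
      by (simp only: mult_ac)
    also have "\<dots> = d i * cnj (d j) * exp (\<i> * of_int (\<xi> i - \<xi> j) * of_real x)"
      by (simp only: c e)
    finally show "(d i * exp (\<i> * of_int (\<xi> i) * of_real x)) * (cnj (d j) * cnj (exp (\<i> * of_int (\<xi> j) * of_real x)))
       = d i * cnj (d j) * exp (\<i> * of_int (\<xi> i - \<xi> j) * of_real x)" .
  qed
  also have "\<dots> = (\<Sum>p\<in>J \<times> J. d (fst p) * cnj (d (snd p)) * exp (\<i> * of_int (\<xi> (fst p) - \<xi> (snd p)) * of_real x))"
    by (simp add: sum.cartesian_product case_prod_beta)
  finally show ?thesis .
qed

definition PS :: "('j \<Rightarrow> complex) \<Rightarrow> ('j \<Rightarrow> int) \<Rightarrow> 'j set \<Rightarrow> complex" where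
  "PS d \<xi> J = (\<Sum>p\<in>{p\<in>J \<times> J. \<xi> (fst p) = \<xi> (snd p)}. d (fst p) * cnj (d (snd p)))"

lemma es_sq_has_integral:
  assumes "finite J"
  shows "((\<lambda>x. complex_of_real ((cmod (es d \<xi> J x))\<^sup>2)) has_integral (of_real (2*pi) * PS d \<xi> J)) {0..2*pi}"
proof -
  have "((\<lambda>x. \<Sum>p\<in>J \<times> J. d (fst p) * cnj (d (snd p)) * exp (\<i> * of_int (\<xi> (fst p) - \<xi> (snd p)) * of_real x))
      has_integral (\<Sum>p\<in>J \<times> J. d (fst p) * cnj (d (snd p)) * (if \<xi> (fst p) - \<xi> (snd p) = 0 then complex_of_real (2*pi) else 0))) {0..2*pi}"
    using assms by (intro has_integral_sum has_integral_mult_right exp_int_2pi) auto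
  moreover have "(\<Sum>p\<in>J \<times> J. d (fst p) * cnj (d (snd p)) * (if \<xi> (fst p) - \<xi> (snd p) = 0 then complex_of_real (2*pi) else 0))
      = of_real (2*pi) * PS d \<xi> J"
    unfolding PS_def using assms
    by (simp add: sum.inter_filter sum_distrib_left if_distrib mult_ac cong: if_cong)
  ultimately show ?thesis
    using es_sq_expand[OF assms] by simp
qed

lemma es_sq_integral:
  assumes "finite J"
  shows "integral {0..2*pi} (\<lambda>x. (cmod (es d \<xi> J x))\<^sup>2) = 2*pi * Re (PS d \<xi> J)"
  using has_integral_Re_of_real[OF es_sq_has_integral[OF assms, of d \<xi>]]
  by (simp add: integral_unique)

lemma trig_poly_es:
  assumes "finite A" "\<And>n. n \<notin> A \<Longrightarrow> c n = 0"
  shows "trig_poly c x = es c id A x"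
  unfolding trig_poly_def es_def
  by (rule sum.mono_neutral_cong_left) (use assms in auto)

lemma PS_id: assumes "finite A" shows "PS c id A = complex_of_real (\<Sum>n\<in>A. (cmod (c n))\<^sup>2)"
proof -
  have "{p \<in> A \<times> A. id (fst p) = id (snd p)} = (\<lambda>n. (n,n)) ` A" by auto
  then have "PS c id A = (\<Sum>n\<in>A. c n * cnj (c n))"
    unfolding PS_def by (simp add: sum.reindex inj_on_def)
  also have "\<dots> = (\<Sum>n\<in>A. complex_of_real ((cmod (c n))\<^sup>2))"
    by (intro sum.cong refl) (rule complex_norm_square[symmetric])
  also have "\<dots> = complex_of_real (\<Sum>n\<in>A. (cmod (c n))\<^sup>2)"
    by simp
  finally show ?thesis .
qed

lemma l2T_trig_poly:
  assumes "finite A" "\<And>n. n \<notin> A \<Longrightarrow> c n = 0"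
  shows "l2T (trig_poly c) = sqrt (2*pi * (\<Sum>n\<in>A. (cmod (c n))\<^sup>2))"
proof -
  have e: "trig_poly c = es c id A" by (rule ext) (rule trig_poly_es[OF assms])
  show ?thesis
    unfolding l2T_def e es_sq_integral[OF assms(1)] PS_id[OF assms(1)] Re_complex_of_real ..
qed

definition Wt :: "real \<Rightarrow> real \<Rightarrow> real" where
  "Wt L \<omega> = (if \<omega> = 0 then 2 * L\<^sup>2 else min (2 * L\<^sup>2) (4 / \<omega>\<^sup>2))"

lemma Wt_nonneg: "0 \<le> Wt L \<omega>"
  by (simp add: Wt_def)

lemma Wt_minus: "Wt L (- \<omega>) = Wt L \<omega>"
  by (simp add: Wt_def)

lemma Jint_prod_le:
  assumes L: "0 < L"
  shows "cmod (Jint 0 (2*L) \<omega>) * cmod (Jint (-L) 0 \<omega>) \<le> Wt L \<omega>"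
proof -
  have a0: "cmod (Jint 0 (2*L) \<omega>) \<le> 2*L - 0" by (rule Jint_norm1) (use L in linarith)
  have b0: "cmod (Jint (-L) 0 \<omega>) \<le> 0 - (-L)" by (rule Jint_norm1) (use L in linarith)
  have ab: "cmod (Jint 0 (2*L) \<omega>) * cmod (Jint (-L) 0 \<omega>) \<le> (2*L) * L"
    by (rule mult_mono) (use a0 b0 L in auto)
  have ab2: "cmod (Jint 0 (2*L) \<omega>) * cmod (Jint (-L) 0 \<omega>) \<le> 2 * L\<^sup>2"
    using ab by (simp only: power2_eq_square mult.assoc)
  show ?thesis
  proof (cases "\<omega> = 0")
    case True then show ?thesis using ab2 unfolding Wt_def by simp
  next
    case False
    have c1: "cmod (Jint 0 (2*L) \<omega>) \<le> 2 / \<bar>\<omega>\<bar>" by (rule Jint_norm2[OF False])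
    have c2: "cmod (Jint (-L) 0 \<omega>) \<le> 2 / \<bar>\<omega>\<bar>" by (rule Jint_norm2[OF False])
    have "cmod (Jint 0 (2*L) \<omega>) * cmod (Jint (-L) 0 \<omega>) \<le> (2 / \<bar>\<omega>\<bar>) * (2 / \<bar>\<omega>\<bar>)"
      by (rule mult_mono[OF c1 c2]) auto
    also have "(2 / \<bar>\<omega>\<bar>) * (2 / \<bar>\<omega>\<bar>) = 4 / \<omega>\<^sup>2"
      by (simp add: power2_eq_square)
    finally have "cmod (Jint 0 (2*L) \<omega>) * cmod (Jint (-L) 0 \<omega>) \<le> 4 / \<omega>\<^sup>2" .
    then show ?thesis using ab2 False unfolding Wt_def by simp
  qed
qed

lemma time_lemma:
  fixes g :: "'p \<Rightarrow> complex" and \<omega> :: "'p \<Rightarrow> real" and \<phi> :: "real \<Rightarrow> real"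
  assumes P: "finite P"
    and rep: "\<And>t. complex_of_real (\<phi> t) = (\<Sum>p\<in>P. g p * exp (\<i> * of_real (\<omega> p) * of_real t))"
    and nn: "\<And>t. 0 \<le> \<phi> t"
    and \<delta>: "0 < \<delta>" "\<delta> \<le> L"
  shows "integral {0..\<delta>} \<phi> \<le> (1/L) * (\<Sum>p\<in>P. cmod (g p) * Wt L (\<omega> p))"
proof -
  have L: "0 < L" using \<delta> by simp
  have hi: "(\<phi> has_integral Re (\<Sum>p\<in>P. g p * Jint a b (\<omega> p))) {a..b}" if "a \<le> b" for a b
  proof -
    have "((\<lambda>t. \<Sum>p\<in>P. g p * exp (\<i> * of_real (\<omega> p) * of_real t)) has_integral (\<Sum>p\<in>P. g p * Jint a b (\<omega> p))) {a..b}"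
      by (intro has_integral_sum[OF P] has_integral_mult_right exp_has_integral that)
    moreover have "(\<lambda>t. complex_of_real (\<phi> t)) = (\<lambda>t. \<Sum>p\<in>P. g p * exp (\<i> * of_real (\<omega> p) * of_real t))"
      by (rule ext) (rule rep)
    ultimately have "((\<lambda>t. complex_of_real (\<phi> t)) has_integral (\<Sum>p\<in>P. g p * Jint a b (\<omega> p))) {a..b}"
      by simp
    then show ?thesis by (rule has_integral_Re_of_real)
  qed
  define X where "X = integral {0..\<delta>} \<phi>"
  define \<psi> where "\<psi> s = Re (\<Sum>p\<in>P. g p * Jint 0 (2*L) (\<omega> p) * exp (\<i> * of_real (\<omega> p) * of_real s))" for s
  have le: "X \<le> \<psi> s" if s: "-L \<le> s" "s \<le> 0" for s
  proof -
    have "X \<le> integral {s..s+2*L} \<phi>"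
      unfolding X_def
    proof (rule integral_subset_le)
      show "{0..\<delta>} \<subseteq> {s..s+2*L}" using s \<delta> by auto
      show "\<phi> integrable_on {0..\<delta>}" using hi[of 0 \<delta>] \<delta> by (auto simp: integrable_on_def)
      show "\<phi> integrable_on {s..s+2*L}" using hi[of s "s+2*L"] L by (auto simp: integrable_on_def)
    qed (use nn in auto)
    also have "\<dots> = Re (\<Sum>p\<in>P. g p * Jint s (s+2*L) (\<omega> p))"
      by (rule integral_unique[OF hi]) (use L in linarith)
    also have "\<dots> = \<psi> s"
      unfolding \<psi>_def Jint_shift by (simp only: mult_ac)
    finally show ?thesis .
  qed
  have "((\<lambda>s. \<Sum>p\<in>P. g p * Jint 0 (2*L) (\<omega> p) * exp (\<i> * of_real (\<omega> p) * of_real s)) has_integral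
      (\<Sum>p\<in>P. g p * Jint 0 (2*L) (\<omega> p) * Jint (-L) 0 (\<omega> p))) {-L..0}"
    using L by (intro has_integral_sum[OF P] has_integral_mult_right exp_has_integral) linarith
  from has_integral_linear[OF this bounded_linear_Re]
  have hpsi: "(\<psi> has_integral Re (\<Sum>p\<in>P. g p * Jint 0 (2*L) (\<omega> p) * Jint (-L) 0 (\<omega> p))) {-L..0}"
    unfolding \<psi>_def o_def .
  have "L * X = integral {-L..0} (\<lambda>s. X)" using L by simp
  also have "\<dots> \<le> integral {-L..0} \<psi>"
  proof (rule integral_le)
    show "(\<lambda>s. X) integrable_on {-L..0}" by (rule integrable_const_ivl)
    show "\<psi> integrable_on {-L..0}" using hpsi by (rule has_integral_integrable)
    show "\<And>x. x \<in> {-L..0} \<Longrightarrow> X \<le> \<psi> x" using le by auto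
  qed
  also have "\<dots> = Re (\<Sum>p\<in>P. g p * Jint 0 (2*L) (\<omega> p) * Jint (-L) 0 (\<omega> p))"
    using hpsi by (rule integral_unique)
  also have "\<dots> \<le> cmod (\<Sum>p\<in>P. g p * Jint 0 (2*L) (\<omega> p) * Jint (-L) 0 (\<omega> p))"
    by (rule complex_Re_le_cmod)
  also have "\<dots> \<le> (\<Sum>p\<in>P. cmod (g p * Jint 0 (2*L) (\<omega> p) * Jint (-L) 0 (\<omega> p)))"
    by (rule norm_sum)
  also have "\<dots> \<le> (\<Sum>p\<in>P. cmod (g p) * Wt L (\<omega> p))"
  proof (rule sum_mono)
    fix p
    have "cmod (g p * Jint 0 (2*L) (\<omega> p) * Jint (-L) 0 (\<omega> p)) = cmod (g p) * (cmod (Jint 0 (2*L) (\<omega> p)) * cmod (Jint (-L) 0 (\<omega> p)))"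
      by (simp add: norm_mult)
    also have "\<dots> \<le> cmod (g p) * Wt L (\<omega> p)"
      by (rule mult_left_mono[OF Jint_prod_le[OF L]]) simp
    finally show "cmod (g p * Jint 0 (2*L) (\<omega> p) * Jint (-L) 0 (\<omega> p)) \<le> cmod (g p) * Wt L (\<omega> p)" .
  qed
  finally have "L * X \<le> (\<Sum>p\<in>P. cmod (g p) * Wt L (\<omega> p))" .
  then show ?thesis unfolding X_def using L by (simp add: field_simps)
qed

lemma es_cong:
  assumes "\<And>j. j \<in> J \<Longrightarrow> d j = d' j" "\<And>j. j \<in> J \<Longrightarrow> \<xi> j = \<xi>' j"
  shows "es d \<xi> J x = es d' \<xi>' J x"
  unfolding es_def using assms by (intro sum.cong) auto

lemma es_mult:
  assumes "finite J1" "finite J2"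
  shows "es d1 \<xi>1 J1 x * es d2 \<xi>2 J2 x = es (\<lambda>p. d1 (fst p) * d2 (snd p)) (\<lambda>p. \<xi>1 (fst p) + \<xi>2 (snd p)) (J1 \<times> J2) x"
proof -
  have e: "exp (\<i> * of_int a * of_real x) * exp (\<i> * of_int b * of_real x) = exp (\<i> * of_int (a + b) * of_real x)" for a b :: int
    by (simp add: exp_add[symmetric] algebra_simps)
  have "es d1 \<xi>1 J1 x * es d2 \<xi>2 J2 x = (\<Sum>i\<in>J1. \<Sum>j\<in>J2. (d1 i * exp (\<i> * of_int (\<xi>1 i) * of_real x)) * (d2 j * exp (\<i> * of_int (\<xi>2 j) * of_real x)))"
    unfolding es_def sum_product ..
  also have "\<dots> = (\<Sum>i\<in>J1. \<Sum>j\<in>J2. d1 i * d2 j * exp (\<i> * of_int (\<xi>1 i + \<xi>2 j) * of_real x))"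
  proof (intro sum.cong refl)
    fix i j
    have "(d1 i * exp (\<i> * of_int (\<xi>1 i) * of_real x)) * (d2 j * exp (\<i> * of_int (\<xi>2 j) * of_real x))
       = d1 i * d2 j * (exp (\<i> * of_int (\<xi>1 i) * of_real x) * exp (\<i> * of_int (\<xi>2 j) * of_real x))"
      by (simp only: mult_ac)
    also have "\<dots> = d1 i * d2 j * exp (\<i> * of_int (\<xi>1 i + \<xi>2 j) * of_real x)" by (simp only: e)
    finally show "(d1 i * exp (\<i> * of_int (\<xi>1 i) * of_real x)) * (d2 j * exp (\<i> * of_int (\<xi>2 j) * of_real x))
       = d1 i * d2 j * exp (\<i> * of_int (\<xi>1 i + \<xi>2 j) * of_real x)" .
  qed
  also have "\<dots> = es (\<lambda>p. d1 (fst p) * d2 (snd p)) (\<lambda>p. \<xi>1 (fst p) + \<xi>2 (snd p)) (J1 \<times> J2) x"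
    unfolding es_def by (simp add: sum.cartesian_product case_prod_beta)
  finally show ?thesis .
qed

lemma es_cnj: "cnj (es d \<xi> J x) = es (\<lambda>j. cnj (d j)) (\<lambda>j. - \<xi> j) J x"
  unfolding es_def cnj_sum by (intro sum.cong refl) (simp add: exp_cnj)

lemma fcoef_es:
  assumes "finite J"
  shows "fcoef (es d \<xi> J) m = (\<Sum>j\<in>{j\<in>J. \<xi> j = m}. d j)"
proof -
  have e: "exp (\<i> * of_int a * of_real x) * exp (- \<i> * of_int m * of_real x) = exp (\<i> * of_int (a - m) * of_real x)" for a :: int and x
    by (simp add: exp_add[symmetric] algebra_simps)
  have eq: "(\<lambda>x. es d \<xi> J x * exp (- \<i> * of_int m * of_real x)) = (\<lambda>x. \<Sum>j\<in>J. d j * exp (\<i> * of_int (\<xi> j - m) * of_real x))"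
    unfolding es_def sum_distrib_right
  proof (intro ext sum.cong refl)
    fix x j
    show "d j * exp (\<i> * of_int (\<xi> j) * of_real x) * exp (- \<i> * of_int m * of_real x) = d j * exp (\<i> * of_int (\<xi> j - m) * of_real x)"
      by (simp only: mult.assoc[of "d j"] e)
  qed
  have "((\<lambda>x. \<Sum>j\<in>J. d j * exp (\<i> * of_int (\<xi> j - m) * of_real x)) has_integral
       (\<Sum>j\<in>J. d j * (if \<xi> j - m = 0 then complex_of_real (2*pi) else 0))) {0..2*pi}"
    by (intro has_integral_sum[OF assms] has_integral_mult_right exp_int_2pi)
  moreover have "(\<Sum>j\<in>J. d j * (if \<xi> j - m = 0 then complex_of_real (2*pi) else 0)) = of_real (2*pi) * (\<Sum>j\<in>{j\<in>J. \<xi> j = m}. d j)"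
    using assms by (simp add: sum.inter_filter sum_distrib_left if_distrib mult_ac cong: if_cong)
  ultimately have h: "((\<lambda>x. \<Sum>j\<in>J. d j * exp (\<i> * of_int (\<xi> j - m) * of_real x)) has_integral
       of_real (2*pi) * (\<Sum>j\<in>{j\<in>J. \<xi> j = m}. d j)) {0..2*pi}" by simp
  have "integral {0..2*pi} (\<lambda>x. es d \<xi> J x * exp (- \<i> * of_int m * of_real x)) = of_real (2*pi) * (\<Sum>j\<in>{j\<in>J. \<xi> j = m}. d j)"
    unfolding eq by (rule integral_unique[OF h])
  then show ?thesis unfolding fcoef_def by simp
qed

lemma fmult_es:
  assumes "finite J"
  shows "fmult \<sigma> (es d \<xi> J) x = es (\<lambda>j. \<sigma> (\<xi> j) * d j) \<xi> J x"
proof -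
  have "fmult \<sigma> (es d \<xi> J) x = infsum (\<lambda>m. \<sigma> m * fcoef (es d \<xi> J) m * exp (\<i> * of_int m * of_real x)) (\<xi> ` J)"
    unfolding fmult_def
  proof (rule infsum_cong_neutral)
    fix m assume "m \<in> UNIV - \<xi> ` J"
    then have "{j\<in>J. \<xi> j = m} = {}" by auto
    then have "fcoef (es d \<xi> J) m = 0" by (simp only: fcoef_es[OF assms] sum.empty)
    then show "\<sigma> m * fcoef (es d \<xi> J) m * exp (\<i> * of_int m * of_real x) = 0"
      by (simp add: fcoef_es[OF assms])
  qed auto
  also have "\<dots> = (\<Sum>m\<in>\<xi> ` J. \<sigma> m * (\<Sum>j\<in>{j\<in>J. \<xi> j = m}. d j) * exp (\<i> * of_int m * of_real x))"
    using assms by (simp add: fcoef_es)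
  also have "\<dots> = (\<Sum>m\<in>\<xi> ` J. (\<Sum>j\<in>{j\<in>J. \<xi> j = m}. \<sigma> (\<xi> j) * d j * exp (\<i> * of_int (\<xi> j) * of_real x)))"
    by (intro sum.cong refl) (simp add: sum_distrib_left sum_distrib_right mult_ac)
  also have "\<dots> = (\<Sum>j\<in>J. \<sigma> (\<xi> j) * d j * exp (\<i> * of_int (\<xi> j) * of_real x))"
    by (rule sum.group[where g=\<xi> and h="\<lambda>j. \<sigma> (\<xi> j) * d j * exp (\<i> * of_int (\<xi> j) * of_real x)", OF assms finite_imageI[OF assms] subset_refl])
  finally show ?thesis unfolding es_def .
qed

lemma finite_annulus: "finite (annulus N)"
proof -
  have "annulus N \<subseteq> {-\<lceil>2*N\<rceil>..\<lceil>2*N\<rceil>}"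
    unfolding annulus_def by (auto split: if_splits simp: abs_le_iff le_ceiling_iff ceiling_le_iff) linarith+
  then show ?thesis by (rule finite_subset) simp
qed

definition sg :: "bool \<Rightarrow> int" where "sg cj = (if cj then -1 else 1)"

definition c3e :: "bool \<Rightarrow> (int \<Rightarrow> complex) \<Rightarrow> int \<Rightarrow> complex" where
  "c3e cj c n = (if cj then cnj (c n) else c n)"

definition Xi :: "bool \<Rightarrow> (int \<times> int) \<times> int \<Rightarrow> int" where
  "Xi cj j = fst (fst j) - snd (fst j) + sg cj * snd j"

definition Tau :: "bool \<Rightarrow> (int \<times> int) \<times> int \<Rightarrow> int" where
  "Tau cj j = (fst (fst j))\<^sup>2 - (snd (fst j))\<^sup>2 + sg cj * (snd j)\<^sup>2"

definition Bc :: "(int \<Rightarrow> complex) \<Rightarrow> (real \<Rightarrow> real) \<Rightarrow> real \<Rightarrow> bool \<Rightarrow> (int \<Rightarrow> complex) \<Rightarrow> (int \<Rightarrow> complex) \<Rightarrow> (int \<Rightarrow> complex)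
    \<Rightarrow> (int \<times> int) \<times> int \<Rightarrow> complex" where
  "Bc \<sigma> \<eta> K cj c1 c2 c3 j = \<sigma> (fst (fst j) - snd (fst j)) * lp_symbol \<eta> K (fst (fst j) - snd (fst j))
     * c1 (fst (fst j)) * cnj (c2 (snd (fst j))) * c3e cj c3 (snd j)"

abbreviation Dt :: "real \<Rightarrow> (int \<Rightarrow> complex) \<Rightarrow> int \<Rightarrow> complex" where
  "Dt t c n \<equiv> exp (- \<i> * of_real t * of_int (n^2)) * c n"

lemma schr_es:
  assumes "finite A" "\<And>n. n \<notin> A \<Longrightarrow> c n = 0"
  shows "schr c t y = es (Dt t c) id A y"
  unfolding schr_def by (rule trig_poly_es) (use assms in auto)

lemma u3_es:
  assumes "finite A" "\<And>n. n \<notin> A \<Longrightarrow> c n = 0"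
  shows "(if cj then cnj (schr c t x) else schr c t x)
     = es (\<lambda>n. exp (- \<i> * of_real t * of_int (sg cj * n^2)) * c3e cj c n) (\<lambda>n. sg cj * n) A x"
proof -
  have sE: "\<And>y. schr c t y = es (Dt t c) id A y" by (rule schr_es) (use assms in auto)
  show ?thesis
  proof (cases cj)
  case True
  have "cnj (schr c t x) = cnj (es (Dt t c) id A x)"
    by (simp only: sE)
  also have "\<dots> = es (\<lambda>n. cnj (Dt t c n)) (\<lambda>n. - id n) A x"
    by (rule es_cnj)
  also have "\<dots> = es (\<lambda>n. exp (- \<i> * of_real t * of_int (sg cj * n^2)) * c3e cj c n) (\<lambda>n. sg cj * n) A x"
    by (rule es_cong) (use True in \<open>simp_all add: sg_def c3e_def exp_cnj\<close>)
  finally show ?thesis using True by simp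
next
  case False
  have "schr c t x = es (Dt t c) id A x"
    by (simp only: sE)
  also have "\<dots> = es (\<lambda>n. exp (- \<i> * of_real t * of_int (sg cj * n^2)) * c3e cj c n) (\<lambda>n. sg cj * n) A x"
    by (intro es_cong) (use False in \<open>simp_all add: sg_def c3e_def\<close>)
  finally show ?thesis using False by simp
qed
qed

lemma exp_combine:
  "exp (- \<i> * of_real t * of_int (a^2)) * cnj (exp (- \<i> * of_real t * of_int (b^2)))
     * exp (- \<i> * of_real t * of_int (e * n^2))
   = exp (\<i> * of_real (of_int (- (a^2 - b^2 + e * n^2))) * of_real t)"
proof -
  have "cnj (exp (- \<i> * of_real t * of_int (b^2))) = exp (\<i> * of_real t * of_int (b^2))"
    by (simp add: exp_cnj)
  then have "exp (- \<i> * of_real t * of_int (a^2)) * cnj (exp (- \<i> * of_real t * of_int (b^2)))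
     * exp (- \<i> * of_real t * of_int (e * n^2))
     = exp (- \<i> * of_real t * of_int (a^2) + \<i> * of_real t * of_int (b^2) + - \<i> * of_real t * of_int (e * n^2))"
    by (simp only: exp_add)
  also have "\<dots> = exp (\<i> * of_real (of_int (- (a^2 - b^2 + e * n^2))) * of_real t)"
    by (rule arg_cong[where f=exp]) (simp add: algebra_simps)
  finally show ?thesis .
qed

lemma trilin_es:
  assumes fin: "finite A1" "finite A2" "finite A3"
    and s1: "\<And>n. n \<notin> A1 \<Longrightarrow> c1 n = 0"
    and s2: "\<And>n. n \<notin> A2 \<Longrightarrow> c2 n = 0"
    and s3: "\<And>n. n \<notin> A3 \<Longrightarrow> c3 n = 0"
  shows "trilin \<sigma> \<eta> K cj c1 c2 c3 t x =
    es (\<lambda>j. Bc \<sigma> \<eta> K cj c1 c2 c3 j * exp (\<i> * of_real (of_int (- Tau cj j)) * of_real t)) (Xi cj) ((A1 \<times> A2) \<times> A3) x"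
proof -
  define d12 where "d12 p = Dt t c1 (fst p) * cnj (Dt t c2 (snd p))" for p :: "int \<times> int"
  define x12 where "x12 p = fst p - snd p" for p :: "int \<times> int"
  have f12: "finite (A1 \<times> A2)" using fin by simp
  have sE1: "\<And>y. schr c1 t y = es (Dt t c1) id A1 y" by (rule schr_es) (use fin s1 in auto)
  have sE2: "\<And>y. schr c2 t y = es (Dt t c2) id A2 y" by (rule schr_es) (use fin s2 in auto)
  have p12: "(\<lambda>y. schr c1 t y * cnj (schr c2 t y)) = es d12 x12 (A1 \<times> A2)"
  proof
    fix y
    show "schr c1 t y * cnj (schr c2 t y) = es d12 x12 (A1 \<times> A2) y"
    proof -
      have "schr c1 t y * cnj (schr c2 t y) = es (Dt t c1) id A1 y * cnj (es (Dt t c2) id A2 y)"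
        by (simp only: sE1 sE2)
      also have "\<dots> = es (Dt t c1) id A1 y * es (\<lambda>n. cnj (Dt t c2 n)) (\<lambda>n. - id n) A2 y"
        by (simp only: es_cnj)
      also have "\<dots> = es d12 x12 (A1 \<times> A2) y"
        unfolding es_mult[OF fin(1,2)] by (rule es_cong) (simp_all add: d12_def x12_def)
      finally show ?thesis .
    qed
  qed
  have m1: "fmult (lp_symbol \<eta> K) (es d12 x12 (A1 \<times> A2)) = es (\<lambda>p. lp_symbol \<eta> K (x12 p) * d12 p) x12 (A1 \<times> A2)"
    by (rule ext) (rule fmult_es[OF f12])
  have m2: "fmult \<sigma> (es (\<lambda>p. lp_symbol \<eta> K (x12 p) * d12 p) x12 (A1 \<times> A2)) x
     = es (\<lambda>p. \<sigma> (x12 p) * (lp_symbol \<eta> K (x12 p) * d12 p)) x12 (A1 \<times> A2) x"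
    by (rule fmult_es[OF f12])
  have "trilin \<sigma> \<eta> K cj c1 c2 c3 t x =
     es (\<lambda>p. \<sigma> (x12 p) * (lp_symbol \<eta> K (x12 p) * d12 p)) x12 (A1 \<times> A2) x
     * es (\<lambda>n. exp (- \<i> * of_real t * of_int (sg cj * n^2)) * c3e cj c3 n) (\<lambda>n. sg cj * n) A3 x"
  proof -
    have u3: "(if cj then cnj (schr c3 t x) else schr c3 t x) =
      es (\<lambda>n. exp (- \<i> * of_real t * of_int (sg cj * n^2)) * c3e cj c3 n) (\<lambda>n. sg cj * n) A3 x"
      by (rule u3_es) (use fin s3 in auto)
    show ?thesis unfolding trilin_def p12 m1 m2 u3 ..
  qed
  also have "\<dots> = es (\<lambda>j. Bc \<sigma> \<eta> K cj c1 c2 c3 j * exp (\<i> * of_real (of_int (- Tau cj j)) * of_real t)) (Xi cj) ((A1 \<times> A2) \<times> A3) x"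
    unfolding es_mult[OF f12 fin(3)]
  proof (rule es_cong)
    fix j :: "(int \<times> int) \<times> int"
    obtain a b n where j: "j = ((a, b), n)" by (metis prod.collapse)
    have "\<sigma> (a - b) * (lp_symbol \<eta> K (a - b) * (exp (- \<i> * of_real t * of_int (a^2)) * c1 a * cnj (exp (- \<i> * of_real t * of_int (b^2)) * c2 b)))
          * (exp (- \<i> * of_real t * of_int (sg cj * n^2)) * c3e cj c3 n)
        = (\<sigma> (a - b) * lp_symbol \<eta> K (a - b) * c1 a * cnj (c2 b) * c3e cj c3 n) *
          (exp (- \<i> * of_real t * of_int (a^2)) * cnj (exp (- \<i> * of_real t * of_int (b^2))) * exp (- \<i> * of_real t * of_int (sg cj * n^2)))"
      by (simp only: complex_cnj_mult mult_ac)
    also have "\<dots> = (\<sigma> (a - b) * lp_symbol \<eta> K (a - b) * c1 a * cnj (c2 b) * c3e cj c3 n) *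
          exp (\<i> * of_real (of_int (- (a^2 - b^2 + sg cj * n^2))) * of_real t)"
      by (simp only: exp_combine)
    finally show "\<sigma> (x12 (fst j)) * (lp_symbol \<eta> K (x12 (fst j)) * d12 (fst j)) *
         (exp (- \<i> * of_real t * of_int (sg cj * (snd j)^2)) * c3e cj c3 (snd j)) =
         Bc \<sigma> \<eta> K cj c1 c2 c3 j * exp (\<i> * of_real (of_int (- Tau cj j)) * of_real t)"
      unfolding j x12_def d12_def Bc_def Tau_def by simp
    show "x12 (fst j) + sg cj * snd j = Xi cj j" unfolding j x12_def Xi_def by simp
  qed
  finally show ?thesis .
qed

lemma phi_rep:
  assumes "finite J"
  shows "complex_of_real (integral {0..2*pi} (\<lambda>x. (cmod (es d \<xi> J x))\<^sup>2)) = of_real (2*pi) * PS d \<xi> J"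
proof -
  have h: "((\<lambda>x. complex_of_real ((cmod (es d \<xi> J x))\<^sup>2)) has_integral (of_real (2*pi) * PS d \<xi> J)) {0..2*pi}"
    by (rule es_sq_has_integral[OF assms])
  have "((\<lambda>x. (cmod (es d \<xi> J x))\<^sup>2) has_integral Re (of_real (2*pi) * PS d \<xi> J)) {0..2*pi}"
    by (rule has_integral_Re_of_real[OF h])
  then have "(\<lambda>x. (cmod (es d \<xi> J x))\<^sup>2) integrable_on {0..2*pi}" by (rule has_integral_integrable)
  then have "((\<lambda>x. complex_of_real ((cmod (es d \<xi> J x))\<^sup>2)) has_integral
       complex_of_real (integral {0..2*pi} (\<lambda>x. (cmod (es d \<xi> J x))\<^sup>2))) {0..2*pi}"
    by (intro has_integral_of_real integrable_integral)
  then show ?thesis using h by (rule has_integral_unique)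
qed

definition Pset :: "bool \<Rightarrow> ((int \<times> int) \<times> int) set \<Rightarrow> (((int \<times> int) \<times> int) \<times> ((int \<times> int) \<times> int)) set" where
  "Pset cj J = {p \<in> J \<times> J. Xi cj (fst p) = Xi cj (snd p)}"

lemma main_integral_bound:
  assumes fin: "finite A1" "finite A2" "finite A3"
    and s1: "\<And>n. n \<notin> A1 \<Longrightarrow> c1 n = 0"
    and s2: "\<And>n. n \<notin> A2 \<Longrightarrow> c2 n = 0"
    and s3: "\<And>n. n \<notin> A3 \<Longrightarrow> c3 n = 0"
    and \<delta>: "0 < \<delta>" "\<delta> \<le> L"
  shows "integral {0..\<delta>} (\<lambda>t. integral {0..2*pi} (\<lambda>x. (cmod (trilin \<sigma> \<eta> K cj c1 c2 c3 t x))\<^sup>2))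
    \<le> (1/L) * (\<Sum>p\<in>Pset cj ((A1 \<times> A2) \<times> A3). (2*pi) * (cmod (Bc \<sigma> \<eta> K cj c1 c2 c3 (fst p)) * cmod (Bc \<sigma> \<eta> K cj c1 c2 c3 (snd p)))
         * Wt L (of_int (Tau cj (snd p) - Tau cj (fst p))))"
proof -
  define J where "J = (A1 \<times> A2) \<times> A3"
  have fJ: "finite J" unfolding J_def using fin by simp
  define B where "B = Bc \<sigma> \<eta> K cj c1 c2 c3"
  define D where "D t j = B j * exp (\<i> * of_real (of_int (- Tau cj j)) * of_real t)" for t j
  have F: "trilin \<sigma> \<eta> K cj c1 c2 c3 t x = es (D t) (Xi cj) J x" for t x
    unfolding D_def B_def J_def by (rule trilin_es) (use fin s1 s2 s3 in auto)
  have ee: "exp (\<i> * of_real (of_int (- a)) * of_real t) * cnj (exp (\<i> * of_real (of_int (- b)) * of_real t))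
      = exp (\<i> * of_real (of_int (b - a)) * of_real t)" for a b :: int and t :: real
  proof -
    have "cnj (exp (\<i> * of_real (of_int (- b)) * of_real t)) = exp (- (\<i> * of_real (of_int (- b)) * of_real t))"
      by (simp add: exp_cnj)
    then show ?thesis by (simp add: exp_add[symmetric] algebra_simps)
  qed
  have rep: "complex_of_real (integral {0..2*pi} (\<lambda>x. (cmod (trilin \<sigma> \<eta> K cj c1 c2 c3 t x))\<^sup>2))
     = (\<Sum>p\<in>Pset cj J. (of_real (2*pi) * (B (fst p) * cnj (B (snd p)))) * exp (\<i> * of_real (of_int (Tau cj (snd p) - Tau cj (fst p))) * of_real t))" for t
  proof -
    have "complex_of_real (integral {0..2*pi} (\<lambda>x. (cmod (trilin \<sigma> \<eta> K cj c1 c2 c3 t x))\<^sup>2))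
        = of_real (2*pi) * PS (D t) (Xi cj) J"
      unfolding F by (rule phi_rep[OF fJ])
    also have "\<dots> = (\<Sum>p\<in>Pset cj J. of_real (2*pi) * (D t (fst p) * cnj (D t (snd p))))"
      unfolding PS_def Pset_def sum_distrib_left ..
    also have "\<dots> = (\<Sum>p\<in>Pset cj J. (of_real (2*pi) * (B (fst p) * cnj (B (snd p)))) * exp (\<i> * of_real (of_int (Tau cj (snd p) - Tau cj (fst p))) * of_real t))"
    proof (intro sum.cong refl)
      fix p
      have "D t (fst p) * cnj (D t (snd p)) = (B (fst p) * cnj (B (snd p))) *
          (exp (\<i> * of_real (of_int (- Tau cj (fst p))) * of_real t) * cnj (exp (\<i> * of_real (of_int (- Tau cj (snd p))) * of_real t)))"
        unfolding D_def by (simp only: complex_cnj_mult mult_ac)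
      also have "\<dots> = (B (fst p) * cnj (B (snd p))) * exp (\<i> * of_real (of_int (Tau cj (snd p) - Tau cj (fst p))) * of_real t)"
        by (simp only: ee)
      finally show "of_real (2*pi) * (D t (fst p) * cnj (D t (snd p))) = (of_real (2*pi) * (B (fst p) * cnj (B (snd p)))) * exp (\<i> * of_real (of_int (Tau cj (snd p) - Tau cj (fst p))) * of_real t)"
        by (simp only: mult.assoc)
    qed
    finally show ?thesis .
  qed
  have fP: "finite (Pset cj J)" unfolding Pset_def using fJ by simp
  have "integral {0..\<delta>} (\<lambda>t. integral {0..2*pi} (\<lambda>x. (cmod (trilin \<sigma> \<eta> K cj c1 c2 c3 t x))\<^sup>2))
     \<le> (1/L) * (\<Sum>p\<in>Pset cj J. cmod (of_real (2*pi) * (B (fst p) * cnj (B (snd p)))) * Wt L (of_int (Tau cj (snd p) - Tau cj (fst p))))"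
  proof (rule time_lemma[OF fP rep _ \<delta>])
    fix t
    have "(\<lambda>x. (cmod (es (D t) (Xi cj) J x))\<^sup>2) integrable_on {0..2*pi}"
      using has_integral_Re_of_real[OF es_sq_has_integral[OF fJ]] by (rule has_integral_integrable)
    then show "0 \<le> integral {0..2*pi} (\<lambda>x. (cmod (trilin \<sigma> \<eta> K cj c1 c2 c3 t x))\<^sup>2)"
      unfolding F by (rule integral_nonneg) auto
  qed
  also have "(\<Sum>p\<in>Pset cj J. cmod (of_real (2*pi) * (B (fst p) * cnj (B (snd p)))) * Wt L (of_int (Tau cj (snd p) - Tau cj (fst p))))
     = (\<Sum>p\<in>Pset cj J. (2*pi) * (cmod (B (fst p)) * cmod (B (snd p))) * Wt L (of_int (Tau cj (snd p) - Tau cj (fst p))))"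
    by (intro sum.cong refl) (simp add: norm_mult)
  finally show ?thesis unfolding J_def B_def .
qed

lemma sum_inv_sq_nat: "n \<ge> 1 \<Longrightarrow> (\<Sum>q\<in>{1..int n}. 1 / (real_of_int q)\<^sup>2) \<le> 2 - 1 / real n"
proof (induction n rule: nat_induct_at_least)
  case base then show ?case by simp
next
  case (Suc n)
  have e: "{1..int (Suc n)} = insert (int n + 1) {1..int n}" by auto
  have "(\<Sum>q\<in>{1..int (Suc n)}. 1 / (real_of_int q)\<^sup>2) = 1 / (real n + 1)\<^sup>2 + (\<Sum>q\<in>{1..int n}. 1 / (real_of_int q)\<^sup>2)"
    unfolding e by (subst sum.insert) auto
  also have "\<dots> \<le> 1 / (real n + 1)\<^sup>2 + (2 - 1 / real n)" using Suc.IH by simp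
  also have "\<dots> \<le> 2 - 1 / real (Suc n)"
  proof -
    have n: "real n \<ge> 1" using Suc.hyps by simp
    have eq: "1 / real n - 1 / (real n + 1) = 1 / (real n * (real n + 1))" using n by (simp add: field_simps)
    have le: "real n * (real n + 1) \<le> (real n + 1)\<^sup>2" unfolding power2_eq_square
      by (rule mult_right_mono) auto
    have "1 / (real n + 1)\<^sup>2 \<le> 1 / (real n * (real n + 1))"
      by (rule divide_left_mono[OF le]) (use n in auto)
    then have "1 / (real n + 1)\<^sup>2 \<le> 1 / real n - 1 / (real n + 1)" unfolding eq .
    moreover have "1 / real (Suc n) = 1 / (real n + 1)" by simp
    ultimately show ?thesis by linarith
  qed
  finally show ?case .
qed

lemma sum_inv_sq:
  assumes "finite T" "\<And>q. q \<in> T \<Longrightarrow> q \<ge> 1"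
  shows "(\<Sum>q\<in>T. 1 / (real_of_int q)\<^sup>2) \<le> 2"
proof (cases "T = {}")
  case True then show ?thesis by simp
next
  case False
  define N where "N = Max T"
  have N1: "N \<ge> 1" using False assms Max_in[OF assms(1) False] unfolding N_def by auto
  have sub: "T \<subseteq> {1..int (nat N)}" using assms N1 Max_ge[OF assms(1)] unfolding N_def by force
  have "(\<Sum>q\<in>T. 1 / (real_of_int q)\<^sup>2) \<le> (\<Sum>q\<in>{1..int (nat N)}. 1 / (real_of_int q)\<^sup>2)"
    by (rule sum_mono2[OF _ sub]) auto
  also have "\<dots> \<le> 2 - 1 / real (nat N)" by (rule sum_inv_sq_nat) (use N1 in linarith)
  also have "\<dots> \<le> 2" by simp
  finally show ?thesis .
qed

lemma sep_sum:
  fixes f :: "int \<Rightarrow> real"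
  assumes S: "finite S" and G: "G > 0" and L: "L > 0"
    and sep: "\<And>x y. x \<in> S \<Longrightarrow> y \<in> S \<Longrightarrow> x < y \<Longrightarrow> f y - f x \<ge> G"
  shows "(\<Sum>x\<in>S. Wt L (f x)) \<le> 4 * L\<^sup>2 + 16 / G\<^sup>2"
proof -
  define p where "p x = \<lfloor>f x / G\<rfloor>" for x
  define U where "U q = (if q = 0 \<or> q = -1 then 2 * L\<^sup>2
      else if q \<ge> 1 then 4 / G\<^sup>2 * (1 / (real_of_int q)\<^sup>2) else 4 / G\<^sup>2 * (1 / (real_of_int (- q - 1))\<^sup>2))" for q :: int
  have Unn: "0 \<le> U q" for q unfolding U_def by auto
  have inj: "inj_on p S"
  proof (rule linorder_inj_onI)
    fix x y assume xy: "x < y" "x \<in> S" "y \<in> S"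
    have "f x / G + 1 = (f x + G) / G" using G by (simp add: field_simps)
    also have "\<dots> \<le> f y / G" using sep[OF xy(2,3,1)] G by (intro divide_right_mono) auto
    finally have "f y / G \<ge> f x / G + 1" .
    then have "p y \<ge> p x + 1" unfolding p_def by (metis floor_add_int floor_mono of_int_1)
    then show "p x \<noteq> p y" by simp
  qed auto
  have WU: "Wt L (f x) \<le> U (p x)" for x
  proof -
    have W1: "Wt L (f x) \<le> 2 * L\<^sup>2" unfolding Wt_def by auto
    have W2: "Wt L (f x) \<le> 4 / (f x)\<^sup>2" if "f x \<noteq> 0" unfolding Wt_def using that by auto
    have fl: "of_int (p x) \<le> f x / G" "f x / G < of_int (p x) + 1" unfolding p_def by linarith+
    show ?thesis
    proof (cases "p x = 0 \<or> p x = -1")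
      case True then show ?thesis using W1 unfolding U_def by auto
    next
      case False
      show ?thesis
      proof (cases "p x \<ge> 1")
        case True
        have q: "real_of_int (p x) \<ge> 1" using True by simp
        have "real_of_int (p x) * G \<le> f x" using fl(1) G by (simp add: field_simps)
        moreover have "real_of_int (p x) * G > 0" using q G by simp
        ultimately have fx: "f x \<ge> real_of_int (p x) * G" "f x > 0" by linarith+
        have "(real_of_int (p x) * G)\<^sup>2 \<le> (f x)\<^sup>2"
          using fx q G by (intro power_mono) auto
        then have "4 / (f x)\<^sup>2 \<le> 4 / (real_of_int (p x) * G)\<^sup>2"
          using q G fx by (intro divide_left_mono) auto
        also have "\<dots> = 4 / G\<^sup>2 * (1 / (real_of_int (p x))\<^sup>2)" by (simp add: power_mult_distrib)
        finally show ?thesis using W2 fx False True unfolding U_def by auto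
      next
        case False2: False
        have q: "p x \<le> -2" using False False2 by auto
        have q': "real_of_int (- p x - 1) \<ge> 1" using q by simp
        have "f x < (real_of_int (p x) + 1) * G" using fl(2) G by (simp add: field_simps)
        moreover have "real_of_int (- p x - 1) * G = - ((real_of_int (p x) + 1) * G)" by (simp add: algebra_simps)
        moreover have "(real_of_int (p x) + 1) * G \<le> 0"
          by (rule mult_nonpos_nonneg) (use q G in auto)
        ultimately have fx: "- f x \<ge> real_of_int (- p x - 1) * G" "f x < 0" by linarith+
        have "(real_of_int (- p x - 1) * G)\<^sup>2 \<le> (- f x)\<^sup>2"
          using fx q' G by (intro power_mono) auto
        then have "4 / (f x)\<^sup>2 \<le> 4 / (real_of_int (- p x - 1) * G)\<^sup>2"
          using q' G fx by (intro divide_left_mono) auto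
        also have "\<dots> = 4 / G\<^sup>2 * (1 / (real_of_int (- p x - 1))\<^sup>2)" by (simp add: power_mult_distrib)
        finally show ?thesis using W2 fx False False2 unfolding U_def by auto
      qed
    qed
  qed
  define T where "T = p ` S"
  have fT: "finite T" unfolding T_def using S by simp
  have "(\<Sum>x\<in>S. Wt L (f x)) \<le> (\<Sum>x\<in>S. U (p x))" by (rule sum_mono) (rule WU)
  also have "\<dots> = (\<Sum>q\<in>T. U q)" unfolding T_def by (simp add: sum.reindex[OF inj])
  also have "\<dots> = (\<Sum>q\<in>{q\<in>T. q = 0 \<or> q = -1}. U q) + (\<Sum>q\<in>{q\<in>T. q \<ge> 1}. U q) + (\<Sum>q\<in>{q\<in>T. q \<le> -2}. U q)"
  proof -
    have "T = {q\<in>T. q = 0 \<or> q = -1} \<union> {q\<in>T. q \<ge> 1} \<union> {q\<in>T. q \<le> -2}" by auto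
    moreover have "(\<Sum>q\<in>{q\<in>T. q = 0 \<or> q = -1} \<union> {q\<in>T. q \<ge> 1} \<union> {q\<in>T. q \<le> -2}. U q)
       = (\<Sum>q\<in>{q\<in>T. q = 0 \<or> q = -1}. U q) + (\<Sum>q\<in>{q\<in>T. q \<ge> 1}. U q) + (\<Sum>q\<in>{q\<in>T. q \<le> -2}. U q)"
      using fT by (subst sum.union_disjoint, auto)+
    ultimately show ?thesis by simp
  qed
  also have "\<dots> \<le> 4 * L\<^sup>2 + 8 / G\<^sup>2 + 8 / G\<^sup>2"
  proof (intro add_mono)
    have "(\<Sum>q\<in>{q\<in>T. q = 0 \<or> q = -1}. U q) \<le> (\<Sum>q\<in>{0, -1}. U q)"
      by (rule sum_mono2) (auto simp: Unn)
    also have "\<dots> = 4 * L\<^sup>2" unfolding U_def by simp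
    finally show "(\<Sum>q\<in>{q\<in>T. q = 0 \<or> q = -1}. U q) \<le> 4 * L\<^sup>2" .
    have "(\<Sum>q\<in>{q\<in>T. q \<ge> 1}. U q) = 4 / G\<^sup>2 * (\<Sum>q\<in>{q\<in>T. q \<ge> 1}. 1 / (real_of_int q)\<^sup>2)"
      unfolding U_def sum_distrib_left by (intro sum.cong refl) auto
    also have "\<dots> \<le> 4 / G\<^sup>2 * 2"
      by (intro mult_left_mono sum_inv_sq) (use fT in auto)
    finally show "(\<Sum>q\<in>{q\<in>T. q \<ge> 1}. U q) \<le> 8 / G\<^sup>2" by simp
    have "(\<Sum>q\<in>{q\<in>T. q \<le> -2}. U q) = 4 / G\<^sup>2 * (\<Sum>q\<in>{q\<in>T. q \<le> -2}. 1 / (real_of_int (- q - 1))\<^sup>2)"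
      unfolding U_def sum_distrib_left by (intro sum.cong refl) auto
    also have "(\<Sum>q\<in>{q\<in>T. q \<le> -2}. 1 / (real_of_int (- q - 1))\<^sup>2) = (\<Sum>r\<in>(\<lambda>q. - q - 1) ` {q\<in>T. q \<le> -2}. 1 / (real_of_int r)\<^sup>2)"
      by (subst sum.reindex) (auto simp: inj_on_def)
    also have "4 / G\<^sup>2 * \<dots> \<le> 4 / G\<^sup>2 * 2"
      by (intro mult_left_mono sum_inv_sq) (use fT in auto)
    finally show "(\<Sum>q\<in>{q\<in>T. q \<le> -2}. U q) \<le> 8 / G\<^sup>2" by simp
  qed
  finally show ?thesis by simp
qed

lemma sg_sq: "sg cj * sg cj = 1" by (simp add: sg_def)

lemma Xi_swap_Pset: "p \<in> Pset cj J \<Longrightarrow> prod.swap p \<in> Pset cj J"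
  unfolding Pset_def by auto

lemma Tau_diff:
  "Tau cj ((n2 + y, n2), n3 + sg cj * (m - y)) - Tau cj ((n2 + x, n2), n3 + sg cj * (m - x))
   = (y - x) * (2 * n2 + x + y - 2 * n3 - sg cj * (2 * m - x - y))"
  unfolding Tau_def sg_def by (cases cj) (simp_all add: algebra_simps power2_eq_square)

lemma bracket_pos: fixes e c a :: real
  shows "\<bar>e\<bar> \<le> c \<Longrightarrow> c \<le> \<bar>a\<bar> \<Longrightarrow> a > 0 \<Longrightarrow> 2 * a + e \<ge> c"
  by (simp add: abs_le_iff abs_if split: if_splits)

lemma bracket_neg: fixes e c a :: real
  shows "\<bar>e\<bar> \<le> c \<Longrightarrow> a \<le> - c \<Longrightarrow> - (2 * a + e) \<ge> c"
  by (simp add: abs_le_iff abs_if split: if_splits)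

lemma inner_sep_sum:
  fixes N2 N3 K L :: real
  assumes L: "L > 0" and N2: "N2 > 0"
    and n2: "N2 / 2 \<le> \<bar>real_of_int n2\<bar>" and n3: "\<bar>real_of_int n3\<bar> \<le> 2 * N3"
    and small: "12 * K + 4 * N3 \<le> N2 / 2"
    and m: "\<bar>real_of_int m\<bar> \<le> 2 * K"
  shows "(\<Sum>m'\<in>{m'. \<bar>real_of_int m'\<bar> \<le> 2 * K}. Wt L (of_int (Tau cj ((n2 + m', n2), n3 + sg cj * (m - m')) - T0)))
     \<le> 4 * L\<^sup>2 + 16 / (N2 / 2)\<^sup>2"
proof -
  define R where "R = {m'::int. \<bar>real_of_int m'\<bar> \<le> 2 * K}"
  have fR: "finite R"
  proof -
    have "R \<subseteq> {-\<lceil>2*K\<rceil>..\<lceil>2*K\<rceil>}" unfolding R_def by (auto simp: abs_le_iff) linarith+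
    then show ?thesis by (rule finite_subset) simp
  qed
  define f where "f y = real_of_int (Tau cj ((n2 + y, n2), n3 + sg cj * (m - y)) - T0)" for y
  have sgb: "\<bar>real_of_int (sg cj)\<bar> = 1" by (simp add: sg_def)
  have diff: "f y - f x = real_of_int (y - x) * (2 * real_of_int n2 + real_of_int (x + y - 2 * n3 - sg cj * (2 * m - x - y)))" for x y
  proof -
    have "f y - f x = real_of_int (Tau cj ((n2 + y, n2), n3 + sg cj * (m - y)) - Tau cj ((n2 + x, n2), n3 + sg cj * (m - x)))"
      unfolding f_def by simp
    also have "\<dots> = real_of_int ((y - x) * (2 * n2 + x + y - 2 * n3 - sg cj * (2 * m - x - y)))"
      by (simp only: Tau_diff)
    finally show ?thesis by (simp add: algebra_simps)
  qed
  have ebound: "\<bar>real_of_int (x + y - 2 * n3 - sg cj * (2 * m - x - y))\<bar> \<le> N2 / 2"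
    if "x \<in> R" "y \<in> R" for x y
  proof -
    have x: "\<bar>real_of_int x\<bar> \<le> 2 * K" and y: "\<bar>real_of_int y\<bar> \<le> 2 * K" using that unfolding R_def by auto
    have "\<bar>real_of_int (sg cj * (2 * m - x - y))\<bar> = \<bar>real_of_int (2 * m - x - y)\<bar>"
      using sgb by (simp add: abs_mult)
    also have "\<dots> \<le> 8 * K" using x y m by linarith
    finally have a: "\<bar>real_of_int (sg cj * (2 * m - x - y))\<bar> \<le> 8 * K" .
    have "\<bar>real_of_int (x + y - 2 * n3 - sg cj * (2 * m - x - y))\<bar> \<le> \<bar>real_of_int x\<bar> + \<bar>real_of_int y\<bar> + 2 * \<bar>real_of_int n3\<bar> + \<bar>real_of_int (sg cj * (2 * m - x - y))\<bar>"
      by simp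
    also have "\<dots> \<le> 12 * K + 4 * N3" using x y n3 a by linarith
    finally show ?thesis using small by linarith
  qed
  show ?thesis
  proof (cases "n2 > 0")
    case True
    have sep: "f y - f x \<ge> N2 / 2" if "x \<in> R" "y \<in> R" "x < y" for x y
    proof -
      have B: "2 * real_of_int n2 + real_of_int (x + y - 2 * n3 - sg cj * (2 * m - x - y)) \<ge> N2 / 2"
        by (rule bracket_pos[OF ebound[OF that(1,2)] n2]) (use True in simp)
      have yx: "real_of_int (y - x) \<ge> 1" using that by simp
      have "N2 / 2 \<le> 1 * (2 * real_of_int n2 + real_of_int (x + y - 2 * n3 - sg cj * (2 * m - x - y)))" using B by simp
      also have "\<dots> \<le> real_of_int (y - x) * (2 * real_of_int n2 + real_of_int (x + y - 2 * n3 - sg cj * (2 * m - x - y)))"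
        by (rule mult_right_mono[OF yx]) (use B N2 in linarith)
      finally show ?thesis unfolding diff .
    qed
    have "(\<Sum>x\<in>R. Wt L (f x)) \<le> 4 * L\<^sup>2 + 16 / (N2 / 2)\<^sup>2"
      by (rule sep_sum[OF fR _ L sep]) (use N2 in auto)
    then show ?thesis unfolding f_def R_def .
  next
    case False
    then have n2n: "real_of_int n2 \<le> - (N2 / 2)" using n2 by (simp add: abs_if split: if_splits)
    have sep: "(- f y) - (- f x) \<ge> N2 / 2" if "x \<in> R" "y \<in> R" "x < y" for x y
    proof -
      have B: "- (2 * real_of_int n2 + real_of_int (x + y - 2 * n3 - sg cj * (2 * m - x - y))) \<ge> N2 / 2"
        by (rule bracket_neg[OF ebound[OF that(1,2)] n2n])
      have yx: "real_of_int (y - x) \<ge> 1" using that by simp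
      have "N2 / 2 \<le> 1 * (- (2 * real_of_int n2 + real_of_int (x + y - 2 * n3 - sg cj * (2 * m - x - y))))" using B by simp
      also have "\<dots> \<le> real_of_int (y - x) * (- (2 * real_of_int n2 + real_of_int (x + y - 2 * n3 - sg cj * (2 * m - x - y))))"
        by (rule mult_right_mono[OF yx]) (use B N2 in linarith)
      finally have T: "N2 / 2 \<le> real_of_int (y - x) * (- (2 * real_of_int n2 + real_of_int (x + y - 2 * n3 - sg cj * (2 * m - x - y))))" .
      have "real_of_int (y - x) * (- (2 * real_of_int n2 + real_of_int (x + y - 2 * n3 - sg cj * (2 * m - x - y))))
         = - (real_of_int (y - x) * (2 * real_of_int n2 + real_of_int (x + y - 2 * n3 - sg cj * (2 * m - x - y))))"
        by (rule mult_minus_right)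
      then show ?thesis using T diff[of y x] by linarith
    qed
    have "(\<Sum>x\<in>R. Wt L (- f x)) \<le> 4 * L\<^sup>2 + 16 / (N2 / 2)\<^sup>2"
      by (rule sep_sum[OF fR _ L sep]) (use N2 in auto)
    then show ?thesis unfolding f_def R_def Wt_minus .
  qed
qed

lemma amgm_prod:
  fixes h h' u v :: real
  assumes "0 \<le> h" "0 \<le> h'"
  shows "h * h' * (u * v) \<le> (h * h' * u\<^sup>2 + h' * h * v\<^sup>2) / 2"
proof -
  have a: "0 \<le> (u - v)\<^sup>2 / 2" by simp
  have b: "(u\<^sup>2 + v\<^sup>2) / 2 - u * v = (u - v)\<^sup>2 / 2" by (simp add: power2_eq_square field_simps)
  have "u * v \<le> (u\<^sup>2 + v\<^sup>2) / 2" using a b by linarith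
  then have "h * h' * (u * v) \<le> h * h' * ((u\<^sup>2 + v\<^sup>2) / 2)"
    using assms by (intro mult_left_mono) auto
  also have "\<dots> = (h * h' * u\<^sup>2 + h' * h * v\<^sup>2) / 2" by (simp add: algebra_simps)
  finally show ?thesis .
qed

lemma lp_bound:
  assumes K: "K > 0" and \<eta>b: "\<And>y. 0 \<le> \<eta> y \<and> \<eta> y \<le> 1" and \<eta>z: "\<And>y. 5/3 < \<bar>y\<bar> \<Longrightarrow> \<eta> y = 0"
  shows "cmod (lp_symbol \<eta> K m) \<le> (if \<bar>real_of_int m\<bar> \<le> 2 * K then 1 else 0)"
proof (cases "\<bar>real_of_int m\<bar> \<le> 2 * K")
  case True
  then show ?thesis using \<eta>b[of "real_of_int m / K"] unfolding lp_symbol_def by simp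
next
  case False
  then have g: "2 * K < \<bar>real_of_int m\<bar>" by simp
  have "\<bar>real_of_int m / K\<bar> = \<bar>real_of_int m\<bar> / K" using K by simp
  moreover have "2 < \<bar>real_of_int m\<bar> / K" using g K by (simp add: less_divide_eq mult.commute)
  ultimately have "\<bar>real_of_int m / K\<bar> > 5/3" by linarith
  then show ?thesis using False \<eta>z unfolding lp_symbol_def by simp
qed

lemma comb_bound:
  fixes N2 N3 K L M :: real
  assumes fin: "finite A1" "finite A2" "finite A3"
    and L: "L > 0" and N2: "N2 > 0" and K: "K > 0"
    and hA2: "\<And>n. n \<in> A2 \<Longrightarrow> N2 / 2 \<le> \<bar>real_of_int n\<bar>"
    and hA3: "\<And>n. n \<in> A3 \<Longrightarrow> \<bar>real_of_int n\<bar> \<le> 2 * N3"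
    and small: "12 * K + 4 * N3 \<le> N2 / 2"
    and \<sigma>b: "\<And>m. cmod (\<sigma> m) \<le> M"
    and \<eta>b: "\<And>y. 0 \<le> \<eta> y \<and> \<eta> y \<le> 1" and \<eta>z: "\<And>y. 5/3 < \<bar>y\<bar> \<Longrightarrow> \<eta> y = 0"
  shows "(\<Sum>p\<in>Pset cj ((A1 \<times> A2) \<times> A3). cmod (Bc \<sigma> \<eta> K cj c1 c2 c3 (fst p)) * cmod (Bc \<sigma> \<eta> K cj c1 c2 c3 (snd p))
        * Wt L (of_int (Tau cj (snd p) - Tau cj (fst p))))
     \<le> M\<^sup>2 * (real (card {m::int. \<bar>real_of_int m\<bar> \<le> 2 * K}) * (4 * L\<^sup>2 + 16 / (N2 / 2)\<^sup>2))
        * ((\<Sum>n\<in>A1. (cmod (c1 n))\<^sup>2) * (\<Sum>n\<in>A2. (cmod (c2 n))\<^sup>2) * (\<Sum>n\<in>A3. (cmod (c3 n))\<^sup>2))"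
proof -
  define J where "J = (A1 \<times> A2) \<times> A3"
  define P where "P = Pset cj J"
  define R where "R = {m::int. \<bar>real_of_int m\<bar> \<le> 2 * K}"
  have fR: "finite R"
  proof -
    have "R \<subseteq> {-\<lceil>2*K\<rceil>..\<lceil>2*K\<rceil>}" unfolding R_def by (auto simp: abs_le_iff) linarith+
    then show ?thesis by (rule finite_subset) simp
  qed
  have fJ: "finite J" unfolding J_def using fin by simp
  have fP: "finite P" unfolding P_def Pset_def using fJ by simp
  define h where "h m = (if \<bar>real_of_int m\<bar> \<le> 2 * K then 1 else 0::real)" for m :: int
  have h01: "0 \<le> h m" "h m \<le> 1" for m unfolding h_def by auto
  define a1 where "a1 n = cmod (c1 n)" for n
  define a2 where "a2 n = cmod (c2 n)" for n
  define a3 where "a3 n = cmod (c3 n)" for n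
  define mm where "mm j = fst (fst j) - snd (fst j)" for j :: "(int \<times> int) \<times> int"
  define \<beta> where "\<beta> j = h (mm j) * (a1 (fst (fst j)) * a2 (snd (fst j)) * a3 (snd j))" for j
  define W where "W p = Wt L (of_int (Tau cj (snd p) - Tau cj (fst p)))" for p
  define X where "X p = h (mm (fst p)) * h (mm (snd p)) * (a1 (fst (fst (fst p))) * a2 (snd (fst (snd p))) * a3 (snd (fst p)))\<^sup>2" for p
  define B where "B = Bc \<sigma> \<eta> K cj c1 c2 c3"
  have M0: "0 \<le> M" using \<sigma>b[of 0] norm_ge_zero[of "\<sigma> 0"] by linarith
  have Wnn: "0 \<le> W p" for p unfolding W_def by (rule Wt_nonneg)
  have Xnn: "0 \<le> X p" for p unfolding X_def using h01 by simp
  have \<beta>nn: "0 \<le> \<beta> j" for j unfolding \<beta>_def a1_def a2_def a3_def using h01 by simp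
  have B\<beta>: "cmod (B j) \<le> M * \<beta> j" for j
  proof -
    have "cmod (B j) = cmod (\<sigma> (mm j)) * cmod (lp_symbol \<eta> K (mm j)) * (a1 (fst (fst j)) * a2 (snd (fst j)) * a3 (snd j))"
      unfolding B_def Bc_def mm_def a1_def a2_def a3_def c3e_def by (simp add: norm_mult)
    also have "\<dots> \<le> M * h (mm j) * (a1 (fst (fst j)) * a2 (snd (fst j)) * a3 (snd j))"
    proof -
      have lpb: "cmod (lp_symbol \<eta> K (mm j)) \<le> h (mm j)" unfolding h_def by (rule lp_bound[OF K \<eta>b \<eta>z])
      have "cmod (\<sigma> (mm j)) * cmod (lp_symbol \<eta> K (mm j)) \<le> M * h (mm j)"
        by (rule mult_mono[OF \<sigma>b lpb]) (use M0 in auto)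
      then show ?thesis by (rule mult_right_mono) (simp add: a1_def a2_def a3_def)
    qed
    finally show ?thesis unfolding \<beta>_def by (simp add: mult_ac)
  qed
  have S1: "(\<Sum>p\<in>P. cmod (B (fst p)) * cmod (B (snd p)) * W p) \<le> (\<Sum>p\<in>P. M\<^sup>2 * (\<beta> (fst p) * \<beta> (snd p) * W p))"
  proof (rule sum_mono)
    fix p
    have "cmod (B (fst p)) * cmod (B (snd p)) \<le> (M * \<beta> (fst p)) * (M * \<beta> (snd p))"
      by (rule mult_mono[OF B\<beta> B\<beta>]) (use M0 \<beta>nn in auto)
    then have "cmod (B (fst p)) * cmod (B (snd p)) * W p \<le> (M * \<beta> (fst p)) * (M * \<beta> (snd p)) * W p"
      by (rule mult_right_mono) (rule Wnn)
    then show "cmod (B (fst p)) * cmod (B (snd p)) * W p \<le> M\<^sup>2 * (\<beta> (fst p) * \<beta> (snd p) * W p)"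
      by (simp add: power2_eq_square mult_ac)
  qed
  have S2: "(\<Sum>p\<in>P. \<beta> (fst p) * \<beta> (snd p) * W p) \<le> (\<Sum>p\<in>P. (X p * W p + X (prod.swap p) * W p) / 2)"
  proof (rule sum_mono)
    fix p
    have "\<beta> (fst p) * \<beta> (snd p) = h (mm (fst p)) * h (mm (snd p)) *
       ((a1 (fst (fst (fst p))) * a2 (snd (fst (snd p))) * a3 (snd (fst p))) * (a1 (fst (fst (snd p))) * a2 (snd (fst (fst p))) * a3 (snd (snd p))))"
      unfolding \<beta>_def by (simp add: mult_ac)
    also have "\<dots> \<le> (X p + X (prod.swap p)) / 2"
      unfolding X_def by (simp only: fst_swap snd_swap) (rule amgm_prod[OF h01(1) h01(1)])
    finally have "\<beta> (fst p) * \<beta> (snd p) * W p \<le> (X p + X (prod.swap p)) / 2 * W p"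
      by (rule mult_right_mono) (rule Wnn)
    also have "(X p + X (prod.swap p)) / 2 * W p = (X p * W p + X (prod.swap p) * W p) / 2"
      by (simp add: algebra_simps)
    finally show "\<beta> (fst p) * \<beta> (snd p) * W p \<le> (X p * W p + X (prod.swap p) * W p) / 2" .
  qed
  have Wswap: "W (prod.swap p) = W p" for p
  proof -
    have "of_int (Tau cj (fst p) - Tau cj (snd p)) = - (of_int (Tau cj (snd p) - Tau cj (fst p)) :: real)" by simp
    then show ?thesis unfolding W_def by (simp only: fst_swap snd_swap Wt_minus)
  qed
  have Sswap: "(\<Sum>p\<in>P. X (prod.swap p) * W p) = (\<Sum>p\<in>P. X p * W p)"
    by (rule sum.reindex_bij_witness[of _ prod.swap prod.swap])
       (auto simp: P_def Pset_def Wswap)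
  have S3: "(\<Sum>p\<in>P. \<beta> (fst p) * \<beta> (snd p) * W p) \<le> (\<Sum>p\<in>P. X p * W p)"
  proof -
    have "(\<Sum>p\<in>P. (X p * W p + X (prod.swap p) * W p) / 2) = ((\<Sum>p\<in>P. X p * W p) + (\<Sum>p\<in>P. X (prod.swap p) * W p)) / 2"
      by (simp only: sum.distrib[symmetric] sum_divide_distrib)
    also have "\<dots> = (\<Sum>p\<in>P. X p * W p)" unfolding Sswap by simp
    finally show ?thesis using S2 by simp
  qed
  define \<psi> where "\<psi> u = (((fst u, fst u - fst (snd (snd (snd u)))), fst (snd (snd u))),
      ((fst (snd u) + snd (snd (snd (snd u))), fst (snd u)), fst (snd (snd u)) + sg cj * (fst (snd (snd (snd u))) - snd (snd (snd (snd u))))))"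
    for u :: "int \<times> int \<times> int \<times> int \<times> int"
  define U where "U = A1 \<times> A2 \<times> A3 \<times> R \<times> R"
  have fU: "finite U" unfolding U_def using fin fR by simp
  define Q where "Q = {p \<in> P. mm (fst p) \<in> R \<and> mm (snd p) \<in> R}"
  have XQ: "X p * W p = 0" if "p \<in> P - Q" for p
  proof -
    have "mm (fst p) \<notin> R \<or> mm (snd p) \<notin> R" using that unfolding Q_def by auto
    then have "h (mm (fst p)) = 0 \<or> h (mm (snd p)) = 0" unfolding h_def R_def by auto
    then show ?thesis unfolding X_def by auto
  qed
  have QU: "Q \<subseteq> \<psi> ` U"
  proof
    fix p assume pQ: "p \<in> Q"
    obtain a b c a' b' c' where p: "p = (((a, b), c), ((a', b'), c'))" by (metis prod.collapse)
    have mem: "a \<in> A1" "b' \<in> A2" "c \<in> A3" "a - b \<in> R" "a' - b' \<in> R"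
      and xi: "a - b + sg cj * c = a' - b' + sg cj * c'"
      using pQ unfolding Q_def P_def Pset_def J_def p mm_def Xi_def by auto
    have e1: "sg cj * (sg cj * z) = z" for z by (simp add: mult.assoc[symmetric] sg_sq)
    have x2: "sg cj * c' = (a - b) - (a' - b') + sg cj * c" using xi by linarith
    have "c' = sg cj * (sg cj * c')" using e1 by simp
    also have "\<dots> = sg cj * ((a - b) - (a' - b') + sg cj * c)" using x2 by simp
    also have "\<dots> = sg cj * ((a - b) - (a' - b')) + sg cj * (sg cj * c)" by (rule distrib_left)
    also have "\<dots> = c + sg cj * ((a - b) - (a' - b'))" using e1 by simp
    finally have c': "c' = c + sg cj * ((a - b) - (a' - b'))" .
    have "p = \<psi> (a, b', c, a - b, a' - b')" unfolding p \<psi>_def c' by simp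
    moreover have "(a, b', c, a - b, a' - b') \<in> U" unfolding U_def using mem by simp
    ultimately show "p \<in> \<psi> ` U" by blast
  qed
  define XW where "XW p = X p * W p" for p
  have XWnn: "0 \<le> XW p" for p unfolding XW_def using Xnn Wnn by simp
  define C1 where "C1 = 4 * L\<^sup>2 + 16 / (N2 / 2)\<^sup>2"
  define V where "V u = (a1 (fst u) * a2 (fst (snd u)) * a3 (fst (snd (snd u))))\<^sup>2 *
      Wt L (of_int (Tau cj ((fst (snd u) + snd (snd (snd (snd u))), fst (snd u)), fst (snd (snd u)) + sg cj * (fst (snd (snd (snd u))) - snd (snd (snd (snd u))))) -
                    Tau cj ((fst u, fst u - fst (snd (snd (snd u)))), fst (snd (snd u)))))" for u :: "int \<times> int \<times> int \<times> int \<times> int"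
  have "(\<Sum>p\<in>P. XW p) = (\<Sum>p\<in>Q. XW p)"
    by (rule sum.mono_neutral_right[OF fP]) (use XQ in \<open>auto simp: Q_def XW_def\<close>)
  also have "\<dots> \<le> (\<Sum>p\<in>\<psi> ` U. XW p)"
    by (rule sum_mono2) (use fU QU XWnn in auto)
  also have "\<dots> \<le> (\<Sum>u\<in>U. (XW \<circ> \<psi>) u)"
    by (rule sum_image_le[OF fU]) (rule XWnn)
  also have "\<dots> \<le> (\<Sum>u\<in>U. V u)"
  proof (rule sum_mono)
    fix u :: "int \<times> int \<times> int \<times> int \<times> int"
    obtain n1 n2 n3 m m' where u: "u = (n1, n2, n3, m, m')" by (metis prod.collapse)
    have psi: "\<psi> u = (((n1, n1 - m), n3), ((n2 + m', n2), n3 + sg cj * (m - m')))"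
      unfolding u \<psi>_def by simp
    have hh: "h (n1 - (n1 - m)) * h (n2 + m' - n2) \<le> 1" unfolding h_def by simp
    have "X (\<psi> u) = h (n1 - (n1 - m)) * h (n2 + m' - n2) * (a1 n1 * a2 n2 * a3 n3)\<^sup>2"
      unfolding X_def psi mm_def by simp
    also have "\<dots> \<le> 1 * (a1 n1 * a2 n2 * a3 n3)\<^sup>2"
      by (rule mult_right_mono[OF hh]) simp
    finally have Xb: "X (\<psi> u) \<le> (a1 n1 * a2 n2 * a3 n3)\<^sup>2" by simp
    have "(XW \<circ> \<psi>) u = X (\<psi> u) * W (\<psi> u)" unfolding XW_def by simp
    also have "\<dots> \<le> (a1 n1 * a2 n2 * a3 n3)\<^sup>2 * W (\<psi> u)"
      by (rule mult_right_mono[OF Xb Wnn])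
    also have "\<dots> = V u" unfolding W_def psi by (simp add: V_def u)
    finally show "(XW \<circ> \<psi>) u \<le> V u" .
  qed
  also have "(\<Sum>u\<in>U. V u) = (\<Sum>n1\<in>A1. \<Sum>n2\<in>A2. \<Sum>n3\<in>A3. (a1 n1 * a2 n2 * a3 n3)\<^sup>2 *
       (\<Sum>m\<in>R. \<Sum>m'\<in>R. Wt L (of_int (Tau cj ((n2 + m', n2), n3 + sg cj * (m - m')) - Tau cj ((n1, n1 - m), n3)))))"
    unfolding U_def sum.cartesian_product' by (simp only: V_def fst_conv snd_conv sum_distrib_left)
  also have "\<dots> \<le> (\<Sum>n1\<in>A1. \<Sum>n2\<in>A2. \<Sum>n3\<in>A3. (a1 n1 * a2 n2 * a3 n3)\<^sup>2 * (real (card R) * C1))"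
  proof (intro sum_mono mult_left_mono)
    fix n1 n2 n3 assume n: "n1 \<in> A1" "n2 \<in> A2" "n3 \<in> A3"
    show "(\<Sum>m\<in>R. \<Sum>m'\<in>R. Wt L (of_int (Tau cj ((n2 + m', n2), n3 + sg cj * (m - m')) - Tau cj ((n1, n1 - m), n3))))
        \<le> real (card R) * C1"
    proof (rule sum_bounded_above)
      fix m assume "m \<in> R"
      then show "(\<Sum>m'\<in>R. Wt L (of_int (Tau cj ((n2 + m', n2), n3 + sg cj * (m - m')) - Tau cj ((n1, n1 - m), n3)))) \<le> C1"
        unfolding R_def C1_def
        by (intro inner_sep_sum[OF L N2 hA2[OF n(2)] hA3[OF n(3)] small]) simp
    qed
  qed simp
  also have "\<dots> = real (card R) * C1 * ((\<Sum>n\<in>A1. (a1 n)\<^sup>2) * (\<Sum>n\<in>A2. (a2 n)\<^sup>2) * (\<Sum>n\<in>A3. (a3 n)\<^sup>2))"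
  proof -
    have e: "(\<Sum>n\<in>A1. (a1 n)\<^sup>2) * (\<Sum>n\<in>A2. (a2 n)\<^sup>2) * (\<Sum>n\<in>A3. (a3 n)\<^sup>2)
        = (\<Sum>n1\<in>A1. \<Sum>n2\<in>A2. \<Sum>n3\<in>A3. (a1 n1)\<^sup>2 * (a2 n2)\<^sup>2 * (a3 n3)\<^sup>2)"
    proof -
      have e1: "(\<Sum>n\<in>A1. (a1 n)\<^sup>2) * (\<Sum>n\<in>A2. (a2 n)\<^sup>2) * (\<Sum>n\<in>A3. (a3 n)\<^sup>2)
          = (\<Sum>n1\<in>A1. (a1 n1)\<^sup>2 * ((\<Sum>n\<in>A2. (a2 n)\<^sup>2) * (\<Sum>n\<in>A3. (a3 n)\<^sup>2)))"
        by (simp only: mult.assoc sum_distrib_right)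
      have e2: "(a1 n1)\<^sup>2 * ((\<Sum>n\<in>A2. (a2 n)\<^sup>2) * (\<Sum>n\<in>A3. (a3 n)\<^sup>2))
          = (\<Sum>n2\<in>A2. \<Sum>n3\<in>A3. (a1 n1)\<^sup>2 * (a2 n2)\<^sup>2 * (a3 n3)\<^sup>2)" for n1
      proof -
        have "(a1 n1)\<^sup>2 * ((\<Sum>n\<in>A2. (a2 n)\<^sup>2) * (\<Sum>n\<in>A3. (a3 n)\<^sup>2))
            = (a1 n1)\<^sup>2 * (\<Sum>n2\<in>A2. \<Sum>n3\<in>A3. (a2 n2)\<^sup>2 * (a3 n3)\<^sup>2)"
          by (simp only: sum_product)
        also have "\<dots> = (\<Sum>n2\<in>A2. \<Sum>n3\<in>A3. (a1 n1)\<^sup>2 * ((a2 n2)\<^sup>2 * (a3 n3)\<^sup>2))"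
          by (simp only: sum_distrib_left)
        finally show ?thesis by (simp only: mult.assoc)
      qed
      show ?thesis unfolding e1 e2 ..
    qed
    have "real (card R) * C1 * ((\<Sum>n\<in>A1. (a1 n)\<^sup>2) * (\<Sum>n\<in>A2. (a2 n)\<^sup>2) * (\<Sum>n\<in>A3. (a3 n)\<^sup>2))
        = real (card R) * C1 * (\<Sum>n1\<in>A1. \<Sum>n2\<in>A2. \<Sum>n3\<in>A3. (a1 n1)\<^sup>2 * (a2 n2)\<^sup>2 * (a3 n3)\<^sup>2)"
      unfolding e ..
    also have "\<dots> = (\<Sum>n1\<in>A1. \<Sum>n2\<in>A2. \<Sum>n3\<in>A3. real (card R) * C1 * ((a1 n1)\<^sup>2 * (a2 n2)\<^sup>2 * (a3 n3)\<^sup>2))"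
      by (simp only: sum_distrib_left)
    also have "\<dots> = (\<Sum>n1\<in>A1. \<Sum>n2\<in>A2. \<Sum>n3\<in>A3. (a1 n1 * a2 n2 * a3 n3)\<^sup>2 * (real (card R) * C1))"
      by (intro sum.cong refl) (simp add: power_mult_distrib mult_ac)
    finally show ?thesis by (rule sym)
  qed
  finally have S4: "(\<Sum>p\<in>P. X p * W p) \<le> real (card R) * C1 * ((\<Sum>n\<in>A1. (a1 n)\<^sup>2) * (\<Sum>n\<in>A2. (a2 n)\<^sup>2) * (\<Sum>n\<in>A3. (a3 n)\<^sup>2))"
    unfolding XW_def .
  have "(\<Sum>p\<in>P. cmod (B (fst p)) * cmod (B (snd p)) * W p) \<le> M\<^sup>2 * (\<Sum>p\<in>P. \<beta> (fst p) * \<beta> (snd p) * W p)"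
    using S1 by (simp add: sum_distrib_left)
  also have "\<dots> \<le> M\<^sup>2 * (real (card R) * C1 * ((\<Sum>n\<in>A1. (a1 n)\<^sup>2) * (\<Sum>n\<in>A2. (a2 n)\<^sup>2) * (\<Sum>n\<in>A3. (a3 n)\<^sup>2)))"
    by (rule mult_left_mono[OF order_trans[OF S3 S4]]) simp
  finally show ?thesis
    unfolding P_def J_def B_def W_def R_def C1_def a1_def a2_def a3_def by (simp add: mult_ac)
qed

lemma card_R_le:
  fixes K :: real assumes K: "K \<ge> 1"
  shows "real (card {m::int. \<bar>real_of_int m\<bar> \<le> 2 * K}) \<le> 5 * K"
proof -
  have e: "{m::int. \<bar>real_of_int m\<bar> \<le> 2 * K} = {-\<lfloor>2*K\<rfloor>..\<lfloor>2*K\<rfloor>}"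
    by (auto simp: abs_le_iff le_floor_iff) (metis floor_le_iff le_floor_iff minus_le_iff of_int_minus)+
  have f0: "0 \<le> \<lfloor>2*K\<rfloor>" using K by simp
  have "card {-\<lfloor>2*K\<rfloor>..\<lfloor>2*K\<rfloor>} = nat (2 * \<lfloor>2*K\<rfloor> + 1)" by simp
  then have "real (card {m::int. \<bar>real_of_int m\<bar> \<le> 2 * K}) = 2 * real_of_int \<lfloor>2*K\<rfloor> + 1"
    unfolding e using f0 by simp
  also have "\<dots> \<le> 4 * K + 1" using of_int_floor_le[of "2*K"] by linarith
  also have "\<dots> \<le> 5 * K" using K by linarith
  finally show ?thesis .
qed

lemma annulus_upper: "n \<in> annulus N \<Longrightarrow> N \<ge> 1 \<Longrightarrow> \<bar>real_of_int n\<bar> \<le> 2 * N"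
  unfolding annulus_def by (auto split: if_splits)

lemma annulus_lower: "n \<in> annulus N \<Longrightarrow> N \<noteq> 1 \<Longrightarrow> N / 2 \<le> \<bar>real_of_int n\<bar>"
  unfolding annulus_def by (auto split: if_splits)

lemma dyadic_ge1: "dyadic N \<Longrightarrow> N \<ge> 1"
  unfolding dyadic_def by auto

lemma core:
  fixes A B N1 N2 N3 K \<delta> M :: real
  assumes A: "1 \<le> A" and B: "0 < B"
    and \<eta>b: "\<And>y. 0 \<le> \<eta> y \<and> \<eta> y \<le> 1" and \<eta>z: "\<And>y. 5/3 < \<bar>y\<bar> \<Longrightarrow> \<eta> y = 0"
    and d: "dyadic N1" "dyadic N2" "dyadic N3" "dyadic K"
    and r1: "N1 \<le> A * N2" and r3: "64 * A * N3 \<le> N1" and rK: "64 * A * K \<le> N1"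
    and \<delta>: "0 < \<delta>" "\<delta> \<le> B / N1"
    and s1: "\<And>n. n \<notin> annulus N1 \<Longrightarrow> c1 n = 0"
    and s2: "\<And>n. n \<notin> annulus N2 \<Longrightarrow> c2 n = 0"
    and s3: "\<And>n. n \<notin> annulus N3 \<Longrightarrow> c3 n = 0"
    and \<sigma>b: "\<And>m. cmod (\<sigma> m) \<le> M"
  shows "l2l2 \<delta> (trilin \<sigma> \<eta> K cj c1 c2 c3)
     \<le> (5 * (4 * B\<^sup>2 + 64 * A\<^sup>2) / B + 1) * M * sqrt (K / N1) * l2T (trig_poly c1) * l2T (trig_poly c2) * l2T (trig_poly c3)"
proof -
  define A1 where "A1 = annulus N1"
  define A2 where "A2 = annulus N2"
  define A3 where "A3 = annulus N3"
  have fin: "finite A1" "finite A2" "finite A3" unfolding A1_def A2_def A3_def by (simp_all add: finite_annulus)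
  have N1: "N1 \<ge> 1" and N2: "N2 \<ge> 1" and N3: "N3 \<ge> 1" and K: "K \<ge> 1" using d by (simp_all add: dyadic_ge1)
  have M0: "0 \<le> M" using \<sigma>b[of 0] norm_ge_zero[of "\<sigma> 0"] by linarith
  define L where "L = B / N1"
  have L: "L > 0" unfolding L_def using B N1 by simp
  have N2lb: "N1 / A \<le> N2" using r1 A by (simp add: divide_le_eq mult.commute)
  have N2big: "N2 \<ge> 64"
  proof -
    have "64 * A \<le> N1" using rK K A by (smt (verit) mult_le_cancel_left1 mult_nonneg_nonneg)
    then have "64 \<le> N1 / A" using A by (simp add: le_divide_eq mult.commute)
    then show ?thesis using N2lb by linarith
  qed
  have hA2: "\<And>n. n \<in> A2 \<Longrightarrow> N2 / 2 \<le> \<bar>real_of_int n\<bar>"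
    unfolding A2_def by (rule annulus_lower) (use N2big in auto)
  have hA3: "\<And>n. n \<in> A3 \<Longrightarrow> \<bar>real_of_int n\<bar> \<le> 2 * N3"
    unfolding A3_def by (rule annulus_upper) (use N3 in auto)
  have small: "12 * K + 4 * N3 \<le> N2 / 2"
  proof -
    have "64 * A * (12 * K + 4 * N3) = 12 * (64 * A * K) + 4 * (64 * A * N3)" by (simp add: algebra_simps)
    then have "64 * A * (12 * K + 4 * N3) \<le> 16 * N1" using r3 rK by linarith
    also have "16 * N1 \<le> 16 * (A * N2)" using r1 by linarith
    finally have "64 * A * (12 * K + 4 * N3) \<le> 16 * A * N2" by simp
    then have "A * (64 * (12 * K + 4 * N3)) \<le> A * (16 * N2)" by (simp add: mult_ac)
    then have "64 * (12 * K + 4 * N3) \<le> 16 * N2" using A by simp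
    moreover have "64 * (12 * K + 4 * N3) = 768 * K + 256 * N3" by simp
    ultimately show ?thesis using N2 by linarith
  qed
  define PP where "PP = (\<Sum>n\<in>A1. (cmod (c1 n))\<^sup>2) * (\<Sum>n\<in>A2. (cmod (c2 n))\<^sup>2) * (\<Sum>n\<in>A3. (cmod (c3 n))\<^sup>2)"
  have PP0: "0 \<le> PP" unfolding PP_def by (intro mult_nonneg_nonneg sum_nonneg) auto
  define S where "S = (\<Sum>p\<in>Pset cj ((A1 \<times> A2) \<times> A3). cmod (Bc \<sigma> \<eta> K cj c1 c2 c3 (fst p)) * cmod (Bc \<sigma> \<eta> K cj c1 c2 c3 (snd p))
        * Wt L (of_int (Tau cj (snd p) - Tau cj (fst p))))"
  define I where "I = integral {0..\<delta>} (\<lambda>t. integral {0..2*pi} (\<lambda>x. (cmod (trilin \<sigma> \<eta> K cj c1 c2 c3 t x))\<^sup>2))"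
  have I1: "I \<le> (1/L) * (2 * pi * S)"
  proof -
    have "I \<le> (1/L) * (\<Sum>p\<in>Pset cj ((A1 \<times> A2) \<times> A3). (2*pi) * (cmod (Bc \<sigma> \<eta> K cj c1 c2 c3 (fst p)) * cmod (Bc \<sigma> \<eta> K cj c1 c2 c3 (snd p)))
         * Wt L (of_int (Tau cj (snd p) - Tau cj (fst p))))"
      unfolding I_def by (rule main_integral_bound[OF fin]) (use s1 s2 s3 \<delta> in \<open>auto simp: A1_def A2_def A3_def L_def\<close>)
    also have "(\<Sum>p\<in>Pset cj ((A1 \<times> A2) \<times> A3). (2*pi) * (cmod (Bc \<sigma> \<eta> K cj c1 c2 c3 (fst p)) * cmod (Bc \<sigma> \<eta> K cj c1 c2 c3 (snd p)))
         * Wt L (of_int (Tau cj (snd p) - Tau cj (fst p)))) = 2 * pi * S"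
      unfolding S_def sum_distrib_left by (intro sum.cong refl) (simp only: mult.assoc)
    finally show ?thesis .
  qed
  define C1 where "C1 = 4 * L\<^sup>2 + 16 / (N2 / 2)\<^sup>2"
  have S1: "S \<le> M\<^sup>2 * (real (card {m::int. \<bar>real_of_int m\<bar> \<le> 2 * K}) * C1) * PP"
    unfolding S_def C1_def PP_def
    by (rule comb_bound[OF fin L _ _ hA2 hA3 small \<sigma>b \<eta>b \<eta>z]) (use N2 K in auto)
  have C1b: "C1 \<le> (4 * B\<^sup>2 + 64 * A\<^sup>2) / N1\<^sup>2"
  proof -
    have "N1 / A \<le> N2" by (rule N2lb)
    then have "(N1 / A)\<^sup>2 \<le> N2\<^sup>2" using N1 A by (intro power_mono) auto
    then have "N1\<^sup>2 \<le> A\<^sup>2 * N2\<^sup>2" using A by (simp add: power_divide divide_le_eq mult.commute)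
    then have "64 / N2\<^sup>2 \<le> 64 * A\<^sup>2 / N1\<^sup>2" using N1 N2 by (simp add: field_simps)
    moreover have "16 / (N2 / 2)\<^sup>2 = 64 / N2\<^sup>2" by (simp add: power_divide)
    moreover have "4 * L\<^sup>2 = 4 * B\<^sup>2 / N1\<^sup>2" unfolding L_def by (simp add: power_divide)
    ultimately show ?thesis unfolding C1_def by (simp add: add_divide_distrib)
  qed
  have cardC1: "real (card {m::int. \<bar>real_of_int m\<bar> \<le> 2 * K}) * C1 \<le> 5 * K * ((4 * B\<^sup>2 + 64 * A\<^sup>2) / N1\<^sup>2)"
    by (rule mult_mono[OF card_R_le[OF K] C1b]) (use K in \<open>auto simp: C1_def\<close>)
  define Q where "Q = 5 * (4 * B\<^sup>2 + 64 * A\<^sup>2) / B"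
  have Ibound: "I \<le> 2 * pi * M\<^sup>2 * PP * (K / N1) * Q"
  proof -
    have "I \<le> (1/L) * (2 * pi * (M\<^sup>2 * (5 * K * ((4 * B\<^sup>2 + 64 * A\<^sup>2) / N1\<^sup>2)) * PP))"
    proof -
      have "S \<le> M\<^sup>2 * (5 * K * ((4 * B\<^sup>2 + 64 * A\<^sup>2) / N1\<^sup>2)) * PP"
        using S1 mult_right_mono[OF mult_left_mono[OF cardC1, of "M\<^sup>2"] PP0] by simp
      then show ?thesis using I1 L by (smt (verit) divide_pos_pos mult_left_mono pi_gt_zero)
    qed
    also have "\<dots> = 2 * pi * M\<^sup>2 * PP * (K / N1) * Q"
      unfolding L_def Q_def using N1 B by (simp add: field_simps power2_eq_square)
    finally show ?thesis .
  qed
  define C where "C = Q + 1"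
  have Q0: "0 \<le> Q" unfolding Q_def using B by simp
  have C1': "1 \<le> C" unfolding C_def using Q0 by simp
  have l1: "l2T (trig_poly c1) = sqrt (2*pi * (\<Sum>n\<in>A1. (cmod (c1 n))\<^sup>2))"
    by (rule l2T_trig_poly) (use fin s1 in \<open>auto simp: A1_def\<close>)
  have l2: "l2T (trig_poly c2) = sqrt (2*pi * (\<Sum>n\<in>A2. (cmod (c2 n))\<^sup>2))"
    by (rule l2T_trig_poly) (use fin s2 in \<open>auto simp: A2_def\<close>)
  have l3: "l2T (trig_poly c3) = sqrt (2*pi * (\<Sum>n\<in>A3. (cmod (c3 n))\<^sup>2))"
    by (rule l2T_trig_poly) (use fin s3 in \<open>auto simp: A3_def\<close>)
  have RHS: "C * M * sqrt (K / N1) * l2T (trig_poly c1) * l2T (trig_poly c2) * l2T (trig_poly c3)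
      = sqrt ((C * M)\<^sup>2 * (K / N1) * ((2*pi)^3 * PP))"
  proof -
    have "sqrt ((C * M)\<^sup>2 * (K / N1) * ((2*pi)^3 * PP)) = sqrt ((C * M)\<^sup>2) * sqrt (K / N1) *
        (sqrt (2*pi * (\<Sum>n\<in>A1. (cmod (c1 n))\<^sup>2)) * sqrt (2*pi * (\<Sum>n\<in>A2. (cmod (c2 n))\<^sup>2)) * sqrt (2*pi * (\<Sum>n\<in>A3. (cmod (c3 n))\<^sup>2)))"
      unfolding PP_def real_sqrt_mult[symmetric] by (simp add: mult_ac power3_eq_cube)
    also have "sqrt ((C * M)\<^sup>2) = C * M" using C1' M0 by simp
    finally show ?thesis unfolding l1 l2 l3 by (simp add: mult_ac)
  qed
  have "I \<le> (C * M)\<^sup>2 * (K / N1) * ((2*pi)^3 * PP)"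
  proof -
    have a: "2 * pi * Q \<le> (2*pi)^3 * C\<^sup>2"
    proof -
      have e: "C\<^sup>2 = Q * Q + 2 * Q + 1" unfolding C_def by (simp add: power2_eq_square algebra_simps)
      have "0 \<le> Q * Q" using Q0 by simp
      then have "Q \<le> C\<^sup>2" unfolding e using Q0 by linarith
      moreover have "2 * pi \<le> (2*pi)^3"
      proof -
        have x1: "1 \<le> 2*pi" using pi_gt3 by linarith
        have x2: "1 \<le> (2*pi)^2" using x1 by (rule one_le_power)
        have "2 * pi * 1 \<le> 2 * pi * (2*pi)^2" by (rule mult_left_mono[OF x2]) simp
        also have "\<dots> = (2*pi)^3" by (simp add: power3_eq_cube power2_eq_square)
        finally show ?thesis by simp
      qed
      ultimately show ?thesis using Q0 pi_gt_zero by (intro mult_mono) auto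
    qed
    have b: "0 \<le> M\<^sup>2 * PP * (K / N1)" using PP0 K N1 by simp
    have "I \<le> (2 * pi * Q) * (M\<^sup>2 * PP * (K / N1))" using Ibound by (simp add: mult_ac)
    also have "\<dots> \<le> ((2*pi)^3 * C\<^sup>2) * (M\<^sup>2 * PP * (K / N1))" by (rule mult_right_mono[OF a b])
    also have "\<dots> = (C * M)\<^sup>2 * (K / N1) * ((2*pi)^3 * PP)" by (simp add: power_mult_distrib mult_ac)
    finally show ?thesis .
  qed
  then have "sqrt I \<le> C * M * sqrt (K / N1) * l2T (trig_poly c1) * l2T (trig_poly c2) * l2T (trig_poly c3)"
    unfolding RHS by (rule real_sqrt_le_mono)
  then show ?thesis unfolding l2l2_def I_def C_def Q_def .
qed

theorem lemma2p10:
  fixes \<eta> :: "real \<Rightarrow> real"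
  assumes smooth: "\<forall>k x. ((deriv ^^ k) \<eta>) differentiable (at x)"
    and even: "\<forall>x. \<eta> (- x) = \<eta> x"
    and mono: "mono_on {0..} \<eta> \<or> antimono_on {0..} \<eta>"
    and bounds: "\<forall>x. indicator {-4/3..4/3} x \<le> \<eta> x \<and> \<eta> x \<le> indicator {-5/3..5/3} x"
  shows "\<forall>A B. 1 \<le> A \<and> 0 < B \<longrightarrow>
    (\<exists>C0 C. 0 < C0 \<and> 0 < C \<and>
      (\<forall>N1 N2 N3 K \<delta> c1 c2 c3.
         dyadic N1 \<and> dyadic N2 \<and> dyadic N3 \<and> dyadic K \<and>
         N1 \<le> A * N2 \<and> N2 \<le> A * N1 \<and> C0 * N3 \<le> N1 \<and> C0 * K \<le> N1 \<and>
         0 < \<delta> \<and> \<delta> \<le> B / N1 \<and>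
         (\<forall>n. n \<notin> annulus N1 \<longrightarrow> c1 n = 0) \<and>
         (\<forall>n. n \<notin> annulus N2 \<longrightarrow> c2 n = 0) \<and>
         (\<forall>n. n \<notin> annulus N3 \<longrightarrow> c3 n = 0) \<longrightarrow>
         l2l2 \<delta> (trilin hilbert_symbol \<eta> K False c1 c2 c3)
           \<le> C * sqrt (K / N1) * l2T (trig_poly c1) * l2T (trig_poly c2) * l2T (trig_poly c3) \<and>
         l2l2 \<delta> (trilin hilbert_symbol \<eta> K True c1 c2 c3)
           \<le> C * sqrt (K / N1) * l2T (trig_poly c1) * l2T (trig_poly c2) * l2T (trig_poly c3) \<and>
         (\<forall>\<sigma> M. (\<forall>m. cmod (\<sigma> m) \<le> M) \<longrightarrow>
           (\<forall>cj. l2l2 \<delta> (trilin \<sigma> \<eta> K cj c1 c2 c3)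
             \<le> C * M * sqrt (K / N1) * l2T (trig_poly c1) * l2T (trig_poly c2) * l2T (trig_poly c3)))))"
proof (intro allI impI)
  fix A B :: real
  assume AB: "1 \<le> A \<and> 0 < B"
  then have A: "1 \<le> A" and B: "0 < B" by auto
  have \<eta>b: "\<And>y. 0 \<le> \<eta> y \<and> \<eta> y \<le> 1"
  proof -
    fix y
    have "indicator {-4/3..4/3} y \<le> \<eta> y" "\<eta> y \<le> indicator {-5/3..5/3} y" using bounds by auto
    moreover have "0 \<le> (indicator {-4/3..4/3} y :: real)" "(indicator {-5/3..5/3} y :: real) \<le> 1"
      by (auto simp: indicator_def)
    ultimately show "0 \<le> \<eta> y \<and> \<eta> y \<le> 1" by linarith
  qed
  have \<eta>z: "\<And>y. 5/3 < \<bar>y\<bar> \<Longrightarrow> \<eta> y = 0"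
  proof -
    fix y :: real assume y: "5/3 < \<bar>y\<bar>"
    then have "y \<notin> {-5/3..5/3}" by auto
    then have "(indicator {-5/3..5/3} y :: real) = 0" by simp
    then show "\<eta> y = 0" using bounds \<eta>b[of y] by (metis order_antisym)
  qed
  define C where "C = 5 * (4 * B\<^sup>2 + 64 * A\<^sup>2) / B + 1"
  have C0: "0 < C" unfolding C_def using B by (simp add: add_pos_nonneg)
  have main: "l2l2 \<delta> (trilin hilbert_symbol \<eta> K False c1 c2 c3)
           \<le> C * sqrt (K / N1) * l2T (trig_poly c1) * l2T (trig_poly c2) * l2T (trig_poly c3) \<and>
         l2l2 \<delta> (trilin hilbert_symbol \<eta> K True c1 c2 c3)
           \<le> C * sqrt (K / N1) * l2T (trig_poly c1) * l2T (trig_poly c2) * l2T (trig_poly c3) \<and>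
         (\<forall>\<sigma> M. (\<forall>m. cmod (\<sigma> m) \<le> M) \<longrightarrow>
           (\<forall>cj. l2l2 \<delta> (trilin \<sigma> \<eta> K cj c1 c2 c3)
             \<le> C * M * sqrt (K / N1) * l2T (trig_poly c1) * l2T (trig_poly c2) * l2T (trig_poly c3)))"
    if H: "dyadic N1 \<and> dyadic N2 \<and> dyadic N3 \<and> dyadic K \<and>
         N1 \<le> A * N2 \<and> N2 \<le> A * N1 \<and> 64 * A * N3 \<le> N1 \<and> 64 * A * K \<le> N1 \<and>
         0 < \<delta> \<and> \<delta> \<le> B / N1 \<and>
         (\<forall>n. n \<notin> annulus N1 \<longrightarrow> c1 n = 0) \<and>
         (\<forall>n. n \<notin> annulus N2 \<longrightarrow> c2 n = 0) \<and>
         (\<forall>n. n \<notin> annulus N3 \<longrightarrow> c3 n = 0)"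
    for N1 N2 N3 K \<delta> :: real and c1 c2 c3 :: "int \<Rightarrow> complex"
  proof -
    have gen: "l2l2 \<delta> (trilin \<sigma> \<eta> K cj c1 c2 c3)
      \<le> C * M * sqrt (K / N1) * l2T (trig_poly c1) * l2T (trig_poly c2) * l2T (trig_poly c3)"
      if "\<And>m. cmod (\<sigma> m) \<le> M" for \<sigma> M cj
      unfolding C_def
      by (rule core[of A B \<eta> N1 N2 N3 K \<delta> c1 c2 c3 \<sigma> M cj])
         (use A B \<eta>b \<eta>z H that in auto)
    have hb: "\<And>m. cmod (hilbert_symbol m) \<le> 1"
      unfolding hilbert_symbol_def by (simp add: norm_mult sgn_if)
    have G1: "l2l2 \<delta> (trilin hilbert_symbol \<eta> K False c1 c2 c3)
           \<le> C * sqrt (K / N1) * l2T (trig_poly c1) * l2T (trig_poly c2) * l2T (trig_poly c3)"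
      using gen[of hilbert_symbol 1 False, OF hb] by simp
    have G2: "l2l2 \<delta> (trilin hilbert_symbol \<eta> K True c1 c2 c3)
           \<le> C * sqrt (K / N1) * l2T (trig_poly c1) * l2T (trig_poly c2) * l2T (trig_poly c3)"
      using gen[of hilbert_symbol 1 True, OF hb] by simp
    have G3: "\<forall>\<sigma> M. (\<forall>m. cmod (\<sigma> m) \<le> M) \<longrightarrow> (\<forall>cj. l2l2 \<delta> (trilin \<sigma> \<eta> K cj c1 c2 c3)
             \<le> C * M * sqrt (K / N1) * l2T (trig_poly c1) * l2T (trig_poly c2) * l2T (trig_poly c3))"
      using gen by blast
    show ?thesis using G1 G2 G3 by blast
  qed
  show "\<exists>C0 C. 0 < C0 \<and> 0 < C \<and>
      (\<forall>N1 N2 N3 K \<delta> c1 c2 c3.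
         dyadic N1 \<and> dyadic N2 \<and> dyadic N3 \<and> dyadic K \<and>
         N1 \<le> A * N2 \<and> N2 \<le> A * N1 \<and> C0 * N3 \<le> N1 \<and> C0 * K \<le> N1 \<and>
         0 < \<delta> \<and> \<delta> \<le> B / N1 \<and>
         (\<forall>n. n \<notin> annulus N1 \<longrightarrow> c1 n = 0) \<and>
         (\<forall>n. n \<notin> annulus N2 \<longrightarrow> c2 n = 0) \<and>
         (\<forall>n. n \<notin> annulus N3 \<longrightarrow> c3 n = 0) \<longrightarrow>
         l2l2 \<delta> (trilin hilbert_symbol \<eta> K False c1 c2 c3)
           \<le> C * sqrt (K / N1) * l2T (trig_poly c1) * l2T (trig_poly c2) * l2T (trig_poly c3) \<and>
         l2l2 \<delta> (trilin hilbert_symbol \<eta> K True c1 c2 c3)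
           \<le> C * sqrt (K / N1) * l2T (trig_poly c1) * l2T (trig_poly c2) * l2T (trig_poly c3) \<and>
         (\<forall>\<sigma> M. (\<forall>m. cmod (\<sigma> m) \<le> M) \<longrightarrow>
           (\<forall>cj. l2l2 \<delta> (trilin \<sigma> \<eta> K cj c1 c2 c3)
             \<le> C * M * sqrt (K / N1) * l2T (trig_poly c1) * l2T (trig_poly c2) * l2T (trig_poly c3))))"
    apply (rule exI[of _ "64 * A"], rule exI[of _ C], intro conjI)
    using A apply simp
     apply (rule C0)
    apply (intro allI impI)
    apply (rule main)
    apply assumption
    done
qed

end
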